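(* Let $(t:\mathcal L_1\to\mathcal L_0,\llbracket\cdot_\lambda\cdot\rrbracket,\mathcal N_0,\mathcal N_1)$ be a strict $2$-term Nijenhuis $\mathcal L_\infty$-conformal algebra. Then $(\mathcal L_0\oplus\mathcal L_1,[\cdot_\lambda\cdot],\mathcal N_0\oplus\mathcal N_1)$ is a Nijenhuis Lie conformal algebra, where $$[(p,m)_\lambda(q,n)]:=\big(\llbracket p_\lambda q\rrbracket,\ \llbracket p_\lambda n\rrbracket-\llbracket q_{-\partial-\lambda}m\rrbracket+\llbracket t(m)_\lambda n\rrbracket\big),\qquad (p,m),(q,n)\in\mathcal L_0\oplus\mathcal L_1 .$$
   Context: All spaces are over $\mathbb C$. A Lie conformal algebra is a $\mathbb C[\partial]$-module with a $\mathbb C$-bilinear $\lambda$-bracket satisfying $[\partial a_\lambda b]=-\lambda[a_\lambda b]$, $[a_\lambda\partial b]=(\partial+\lambda)[a_\lambda b]$, $[a_\lambda b]=-[b_{-\partial-\lambda}a]$, $[a_\lambda[b_\mu c]]=[[a_\lambda b]_{\lambda+\mu}c]+[b_\mu[a_\lambda c]]$; a Nijenhuis operator is a $\mathbb C[\partial]$-linear $\mathcal N$ with $[\mathcal N(p)_\lambda\mathcal N(q)]=\mathcal N([\mathcal N(p)_\lambda q]+[p_\lambda\mathcal N(q)]-\mathcal N([p_\lambda q]))$, and a Nijenhuis Lie conformal algebra is a Lie conformal algebra with a Nijenhuis operator. A strict $2$-term Nijenhuis $\mathcal L_\infty$-conformal algebra consists of a $\mathbb C[\partial]$-linear map $t:\mathcal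 L_1\to\mathcal L_0$, conformal sesquilinear $\mathbb C$-bilinear brackets $\llbracket\cdot_\lambda\cdot\rrbracket$: $\mathcal L_0\otimes\mathcal L_0\to\mathcal L_0[\lambda]$, $\mathcal L_0\otimes\mathcal L_1\to\mathcal L_1[\lambda]$, $\mathcal L_1\otimes\mathcal L_0\to\mathcal L_1[\lambda]$ (with $\llbracket m_\lambda n\rrbracket=0$ on $\mathcal L_1$), and $\mathbb C[\partial]$-linear $\mathcal N_0:\mathcal L_0\to\mathcal L_0$, $\mathcal N_1:\mathcal L_1\to\mathcal L_1$, such that for all $p,q,r\in\mathcal L_0$, $m,n\in\mathcal L_1$: $\llbracket p_\lambda m\rrbracket=-\llbracket m_{-\partial-\lambda}p\rrbracket$; $\llbracket p_\lambda q\rrbracket=-\llbracket q_{-\partial-\lambda}p\rrbracket$; $t\llbracket p_\lambda m\rrbracket=\llbracket p_\lambda t(m)\rrbracket$; $\llbracket t(m)_\lambda n\rrbracket=\llbracket m_\lambda t(n)\rrbracket$; $\llbracket p_\lambda\llbracket q_\mu r\rrbracket\rrbracket-\llbracket\llbracket p_\lambda q\rrbracket_{\lambda+\mu}r\rrbracket-\llbracket q_\mu\llbracket p_\lambda r\rrbracket\rrbracket=0$; $\llbracket p_\lambda\llbracket q_\mu m\rrbracket\rrbracket-\llbracket\llbracket p_\lambda q\rrbracket_{\lambda+\mu}m\rrbracket-\llbracket q_\mu\llbracket p_\lambda m\rrbracket\rrbracket=0$; $t\circ\mathcal N_1=\mathcal N_0\circ t$; $\mathcal N_0(\llbracket\mathcal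 N_0(p)_\lambda q\rrbracket+\llbracket p_\lambda\mathcal N_0(q)\rrbracket-\mathcal N_0\llbracket p_\lambda q\rrbracket)=\llbracket\mathcal N_0(p)_\lambda\mathcal N_0(q)\rrbracket$; $\mathcal N_1(\llbracket\mathcal N_0(p)_\lambda m\rrbracket+\llbracket p_\lambda\mathcal N_1(m)\rrbracket-\mathcal N_1\llbracket p_\lambda m\rrbracket)=\llbracket\mathcal N_0(p)_\lambda\mathcal N_1(m)\rrbracket$. *)

theory Defs
  imports Complex_Main "HOL-Library.Product_Plus"
begin

text \<open>A C-vector space is a type of class ab_group_add together with a
scalar multiplication sc :: complex => 'v => 'v satisfying the locale vector_space.
A C[d]-module is such a space with a C-linear endomorphism d (the action of the
derivation).  An element of V[lambda] is represented by its coefficient function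
nat => V (coefficient of lambda^j) with finite support.  A lambda-bracket is a map
br :: 'a => 'b => nat => 'c, where br a b j is the coefficient of lambda^j in
[a_lambda b].  Polynomials in two variables lambda, mu are coefficient functions
(i, j) for lambda^i mu^j.\<close>

definition cmodule :: "(complex \<Rightarrow> 'v::ab_group_add \<Rightarrow> 'v) \<Rightarrow> ('v \<Rightarrow> 'v) \<Rightarrow> bool" where
  "cmodule sc d \<longleftrightarrow> vector_space sc \<and> Vector_Spaces.linear sc sc d"

definition cd_linear ::
  "(complex \<Rightarrow> 'a::ab_group_add \<Rightarrow> 'a) \<Rightarrow> ('a \<Rightarrow> 'a) \<Rightarrow>
   (complex \<Rightarrow> 'b::ab_group_add \<Rightarrow> 'b) \<Rightarrow> ('b \<Rightarrow> 'b) \<Rightarrow> ('a \<Rightarrow> 'b) \<Rightarrow> bool" where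
  "cd_linear s1 d1 s2 d2 f \<longleftrightarrow> Vector_Spaces.linear s1 s2 f \<and> (\<forall>a. f (d1 a) = d2 (f a))"

definition fin_poly :: "(nat \<Rightarrow> 'v::zero) \<Rightarrow> bool" where
  "fin_poly p \<longleftrightarrow> finite {j. p j \<noteq> 0}"

definition lbracket ::
  "(complex \<Rightarrow> 'a::ab_group_add \<Rightarrow> 'a) \<Rightarrow> (complex \<Rightarrow> 'b::ab_group_add \<Rightarrow> 'b) \<Rightarrow>
   (complex \<Rightarrow> 'c::ab_group_add \<Rightarrow> 'c) \<Rightarrow> ('a \<Rightarrow> 'b \<Rightarrow> nat \<Rightarrow> 'c) \<Rightarrow> bool" where
  "lbracket s1 s2 s3 br \<longleftrightarrow>
     (\<forall>a b. fin_poly (br a b)) \<and>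
     (\<forall>b j. Vector_Spaces.linear s1 s3 (\<lambda>a. br a b j)) \<and>
     (\<forall>a j. Vector_Spaces.linear s2 s3 (\<lambda>b. br a b j))"

text \<open>Conformal sesquilinearity: [d a_lambda b] = -lambda [a_lambda b] and
  [a_lambda d b] = (d + lambda) [a_lambda b].\<close>
definition sesquilinear ::
  "('a \<Rightarrow> 'a) \<Rightarrow> ('b \<Rightarrow> 'b) \<Rightarrow> ('c::ab_group_add \<Rightarrow> 'c) \<Rightarrow> ('a \<Rightarrow> 'b \<Rightarrow> nat \<Rightarrow> 'c) \<Rightarrow> bool" where
  "sesquilinear d1 d2 d3 br \<longleftrightarrow>
     (\<forall>a b j. br (d1 a) b j = - (if j = 0 then 0 else br a b (j - 1))) \<and>
     (\<forall>a b j. br a (d2 b) j = d3 (br a b j) + (if j = 0 then 0 else br a b (j - 1)))"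

text \<open>Substitution lambda := -d - lambda in p(lambda) = sum_k lambda^k c_k, where d acts on the
  coefficients: sum_k (-d-lambda)^k c_k; coefficient of lambda^i is
  sum_k (-1)^k (k choose i) d^(k-i) c_k.\<close>
definition subst_mdl :: "(complex \<Rightarrow> 'v::ab_group_add \<Rightarrow> 'v) \<Rightarrow> ('v \<Rightarrow> 'v) \<Rightarrow> (nat \<Rightarrow> 'v) \<Rightarrow> nat \<Rightarrow> 'v" where
  "subst_mdl sc d p i = (\<Sum>k\<in>{k. p k \<noteq> 0}. sc ((-1) ^ k * of_nat (k choose i)) ((d ^^ (k - i)) (p k)))"

text \<open>Coefficient of lambda^i mu^j in [a_lambda [b_mu c]] (outer bracket B1, inner B2).\<close>
definition nest_left :: "('a \<Rightarrow> 'y \<Rightarrow> nat \<Rightarrow> 'z) \<Rightarrow> ('b \<Rightarrow> 'c \<Rightarrow> nat \<Rightarrow> 'y) \<Rightarrow> 'a \<Rightarrow> 'b \<Rightarrow> 'c \<Rightarrow> nat \<Rightarrow> nat \<Rightarrow> 'z" where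
  "nest_left B1 B2 a b c i j = B1 a (B2 b c j) i"

text \<open>Coefficient of lambda^i mu^j in [b_mu [a_lambda c]] (outer bracket B1, inner B2).\<close>
definition nest_right :: "('b \<Rightarrow> 'y \<Rightarrow> nat \<Rightarrow> 'z) \<Rightarrow> ('a \<Rightarrow> 'c \<Rightarrow> nat \<Rightarrow> 'y) \<Rightarrow> 'a \<Rightarrow> 'b \<Rightarrow> 'c \<Rightarrow> nat \<Rightarrow> nat \<Rightarrow> 'z" where
  "nest_right B1 B2 a b c i j = B1 b (B2 a c i) j"

text \<open>Coefficient of lambda^i mu^j in [[a_lambda b]_(lambda+mu) c]: with [a_lambda b] = sum_k lambda^k e_k
  and [e_nu c] = sum_l nu^l f_(k,l), this is sum_(k,l) lambda^k (lambda+mu)^l f_(k,l).\<close>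
definition nest_mid :: "(complex \<Rightarrow> 'z::ab_group_add \<Rightarrow> 'z) \<Rightarrow> ('y \<Rightarrow> 'c \<Rightarrow> nat \<Rightarrow> 'z) \<Rightarrow> ('a \<Rightarrow> 'b \<Rightarrow> nat \<Rightarrow> 'y) \<Rightarrow>
    'a \<Rightarrow> 'b \<Rightarrow> 'c \<Rightarrow> nat \<Rightarrow> nat \<Rightarrow> 'z" where
  "nest_mid sc B1 B2 a b c i j = (\<Sum>l\<in>{j..i+j}. sc (of_nat (l choose j)) (B1 (B2 a b (i + j - l)) c l))"

definition lie_conformal ::
  "(complex \<Rightarrow> 'v::ab_group_add \<Rightarrow> 'v) \<Rightarrow> ('v \<Rightarrow> 'v) \<Rightarrow> ('v \<Rightarrow> 'v \<Rightarrow> nat \<Rightarrow> 'v) \<Rightarrow> bool" where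
  "lie_conformal sc d br \<longleftrightarrow>
     cmodule sc d \<and> lbracket sc sc sc br \<and> sesquilinear d d d br \<and>
     (\<forall>a b. br a b = (\<lambda>i. - subst_mdl sc d (br b a) i)) \<and>
     (\<forall>a b c. nest_left br br a b c = (\<lambda>i j. nest_mid sc br br a b c i j + nest_right br br a b c i j))"

definition nijenhuis_op ::
  "(complex \<Rightarrow> 'v::ab_group_add \<Rightarrow> 'v) \<Rightarrow> ('v \<Rightarrow> 'v) \<Rightarrow> ('v \<Rightarrow> 'v \<Rightarrow> nat \<Rightarrow> 'v) \<Rightarrow> ('v \<Rightarrow> 'v) \<Rightarrow> bool" where
  "nijenhuis_op sc d br N \<longleftrightarrow>
     cd_linear sc d sc d N \<and>
     (\<forall>p q j. br (N p) (N q) j = N (br (N p) q j + br p (N q) j - N (br p q j)))"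

definition nijenhuis_lie_conformal ::
  "(complex \<Rightarrow> 'v::ab_group_add \<Rightarrow> 'v) \<Rightarrow> ('v \<Rightarrow> 'v) \<Rightarrow> ('v \<Rightarrow> 'v \<Rightarrow> nat \<Rightarrow> 'v) \<Rightarrow> ('v \<Rightarrow> 'v) \<Rightarrow> bool" where
  "nijenhuis_lie_conformal sc d br N \<longleftrightarrow> lie_conformal sc d br \<and> nijenhuis_op sc d br N"

text \<open>L0 has scalars s0 and derivation d0,
  L1 has s1, d1.  b00: L0 x L0 -> L0[lambda], b01: L0 x L1 -> L1[lambda],
  b10: L1 x L0 -> L1[lambda]; the bracket on L1 x L1 is zero (not part of the data).\<close>
definition strict_2term_nij_Linf ::
  "(complex \<Rightarrow> 'a::ab_group_add \<Rightarrow> 'a) \<Rightarrow> ('a \<Rightarrow> 'a) \<Rightarrow>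
   (complex \<Rightarrow> 'b::ab_group_add \<Rightarrow> 'b) \<Rightarrow> ('b \<Rightarrow> 'b) \<Rightarrow>
   ('b \<Rightarrow> 'a) \<Rightarrow> ('a \<Rightarrow> 'a \<Rightarrow> nat \<Rightarrow> 'a) \<Rightarrow> ('a \<Rightarrow> 'b \<Rightarrow> nat \<Rightarrow> 'b) \<Rightarrow> ('b \<Rightarrow> 'a \<Rightarrow> nat \<Rightarrow> 'b) \<Rightarrow>
   ('a \<Rightarrow> 'a) \<Rightarrow> ('b \<Rightarrow> 'b) \<Rightarrow> bool" where
  "strict_2term_nij_Linf s0 d0 s1 d1 t b00 b01 b10 N0 N1 \<longleftrightarrow>
     cmodule s0 d0 \<and> cmodule s1 d1 \<and>
     cd_linear s1 d1 s0 d0 t \<and>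
     lbracket s0 s0 s0 b00 \<and> sesquilinear d0 d0 d0 b00 \<and>
     lbracket s0 s1 s1 b01 \<and> sesquilinear d0 d1 d1 b01 \<and>
     lbracket s1 s0 s1 b10 \<and> sesquilinear d1 d0 d1 b10 \<and>
     cd_linear s0 d0 s0 d0 N0 \<and> cd_linear s1 d1 s1 d1 N1 \<and>
     (\<forall>p m. b01 p m = (\<lambda>i. - subst_mdl s1 d1 (b10 m p) i)) \<and>
     (\<forall>p q. b00 p q = (\<lambda>i. - subst_mdl s0 d0 (b00 q p) i)) \<and>
     (\<forall>p m i. t (b01 p m i) = b00 p (t m) i) \<and>
     (\<forall>m n i. b01 (t m) n i = b10 m (t n) i) \<and>
     (\<forall>p q r i j. nest_left b00 b00 p q r i j - nest_mid s0 b00 b00 p q r i j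
                  - nest_right b00 b00 p q r i j = 0) \<and>
     (\<forall>p q m i j. nest_left b01 b01 p q m i j - nest_mid s1 b01 b00 p q m i j
                  - nest_right b01 b01 p q m i j = 0) \<and>
     (\<forall>m. t (N1 m) = N0 (t m)) \<and>
     (\<forall>p q i. N0 (b00 (N0 p) q i + b00 p (N0 q) i - N0 (b00 p q i)) = b00 (N0 p) (N0 q) i) \<and>
     (\<forall>p m i. N1 (b01 (N0 p) m i + b01 p (N1 m) i - N1 (b01 p m i)) = b01 (N0 p) (N1 m) i)"

definition sum_scale :: "(complex \<Rightarrow> 'a \<Rightarrow> 'a) \<Rightarrow> (complex \<Rightarrow> 'b \<Rightarrow> 'b) \<Rightarrow> complex \<Rightarrow> 'a \<times> 'b \<Rightarrow> 'a \<times> 'b" where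
  "sum_scale s0 s1 c x = (s0 c (fst x), s1 c (snd x))"

definition sum_map :: "('a \<Rightarrow> 'a) \<Rightarrow> ('b \<Rightarrow> 'b) \<Rightarrow> 'a \<times> 'b \<Rightarrow> 'a \<times> 'b" where
  "sum_map f g x = (f (fst x), g (snd x))"

definition sum_bracket ::
  "(complex \<Rightarrow> 'b::ab_group_add \<Rightarrow> 'b) \<Rightarrow> ('b \<Rightarrow> 'b) \<Rightarrow> ('b \<Rightarrow> 'a) \<Rightarrow>
   ('a \<Rightarrow> 'a \<Rightarrow> nat \<Rightarrow> 'a) \<Rightarrow> ('a \<Rightarrow> 'b \<Rightarrow> nat \<Rightarrow> 'b) \<Rightarrow>
   'a \<times> 'b \<Rightarrow> 'a \<times> 'b \<Rightarrow> nat \<Rightarrow> 'a \<times> 'b" where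
  "sum_bracket s1 d1 t b00 b01 x y i =
     (b00 (fst x) (fst y) i,
      b01 (fst x) (snd y) i - subst_mdl s1 d1 (b01 (fst y) (snd x)) i + b01 (t (snd x)) (snd y) i)"

end

theory Submission
  imports Defs "HOL-Computational_Algebra.Polynomial"
begin

lemma lin_add: "Vector_Spaces.linear s1 s2 f \<Longrightarrow> f (x + y) = f x + f y"
  by (simp add: Vector_Spaces.linear_iff)
lemma lin_sc: "Vector_Spaces.linear s1 s2 f \<Longrightarrow> f (s1 c x) = s2 c (f x)"
  by (simp add: Vector_Spaces.linear_iff)
lemma lin_0: "Vector_Spaces.linear s1 s2 f \<Longrightarrow> f 0 = 0"
  unfolding linear_iff_module_hom using module_hom.zero by blast
lemma lin_neg: "Vector_Spaces.linear s1 s2 f \<Longrightarrow> f (- x) = - f x"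
  unfolding linear_iff_module_hom using module_hom.neg by blast
lemma lin_diff: "Vector_Spaces.linear s1 s2 f \<Longrightarrow> f (x - y) = f x - f y"
  unfolding linear_iff_module_hom using module_hom.diff by blast
lemma lin_sum: "Vector_Spaces.linear s1 s2 f \<Longrightarrow> f (sum g A) = (\<Sum>a\<in>A. f (g a))"
  unfolding linear_iff_module_hom using module_hom.sum by blast

definition bnd :: "(nat \<Rightarrow> 'v::zero) \<Rightarrow> nat \<Rightarrow> bool" where
  "bnd p N \<longleftrightarrow> (\<forall>k>N. p k = 0)"

lemma bnd_mono: "bnd p N \<Longrightarrow> N \<le> M \<Longrightarrow> bnd p M"
  by (auto simp: bnd_def)

lemma fin_poly_bnd: "fin_poly p \<longleftrightarrow> (\<exists>N. bnd p N)"
proof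
  assume "fin_poly p"
  then have f: "finite {j. p j \<noteq> 0}" by (simp add: fin_poly_def)
  show "\<exists>N. bnd p N"
  proof (intro exI[of _ "Max (insert 0 {j. p j \<noteq> 0})"])
    show "bnd p (Max (insert 0 {j. p j \<noteq> 0}))"
      unfolding bnd_def
    proof (intro allI impI)
      fix k assume "Max (insert 0 {j. p j \<noteq> 0}) < k"
      moreover have "p k \<noteq> 0 \<Longrightarrow> k \<le> Max (insert 0 {j. p j \<noteq> 0})"
        using f by (intro Max_ge) auto
      ultimately show "p k = 0" by fastforce
    qed
  qed
next
  assume "\<exists>N. bnd p N"
  then obtain N where "bnd p N" by blast
  then have "{j. p j \<noteq> 0} \<subseteq> {..N}" by (auto simp: bnd_def not_less[symmetric])
  then show "fin_poly p" unfolding fin_poly_def using finite_subset by blast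
qed

lemma bnd_supp: "bnd p N \<Longrightarrow> {k. p k \<noteq> 0} \<subseteq> {..N}"
  by (auto simp: bnd_def not_less[symmetric])

definition sev :: "(complex \<Rightarrow> 'v::ab_group_add \<Rightarrow> 'v) \<Rightarrow> (nat \<Rightarrow> 'v) \<Rightarrow> complex \<Rightarrow> 'v" where
  "sev sc p c = (\<Sum>k\<in>{k. p k \<noteq> 0}. sc (c ^ k) (p k))"

locale cmod =
  fixes sc :: "complex \<Rightarrow> 'v::ab_group_add \<Rightarrow> 'v" and d :: "'v \<Rightarrow> 'v"
  assumes vs: "vector_space sc" and dlin: "Vector_Spaces.linear sc sc d"
begin

sublocale V: vector_space sc by (rule vs)

lemma sc_0[simp]: "sc c 0 = 0" by simp
lemma d_0[simp]: "d 0 = 0" using lin_0[OF dlin] .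
lemma d_add: "d (v + w) = d v + d w" using lin_add[OF dlin] .
lemma sc_0l[simp]: "sc 0 v = 0" by simp

lemma dpow_lin: "Vector_Spaces.linear sc sc (d ^^ n)"
proof (induction n)
  case 0
  then show ?case using V.linear_id by (simp add: id_def)
next
  case (Suc n)
  have "Vector_Spaces.linear sc sc (d \<circ> (d ^^ n))"
    using Vector_Spaces.linear_compose[OF Suc dlin] .
  then show ?case by (simp add: o_def)
qed

lemma dpow_0[simp]: "(d ^^ n) 0 = 0" using lin_0[OF dpow_lin] .

lemma sev_superset:
  assumes "finite S" "{k. p k \<noteq> 0} \<subseteq> S"
  shows "sev sc p c = (\<Sum>k\<in>S. sc (c ^ k) (p k))"
  unfolding sev_def
  by (rule sum.mono_neutral_left[OF assms(1) assms(2)]) auto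

lemma sev_bnd: "bnd p N \<Longrightarrow> sev sc p c = (\<Sum>k\<le>N. sc (c ^ k) (p k))"
  by (rule sev_superset) (auto dest: bnd_supp)

definition act :: "complex poly \<Rightarrow> 'v \<Rightarrow> 'v" where
  "act P v = (\<Sum>k\<le>degree P. sc (coeff P k) ((d ^^ k) v))"

lemma act_bnd: "degree P \<le> n \<Longrightarrow> act P v = (\<Sum>k\<le>n. sc (coeff P k) ((d ^^ k) v))"
  unfolding act_def
  by (rule sum.mono_neutral_left) (auto simp: coeff_eq_0)

lemma act_pCons: "act (pCons a P) v = sc a v + d (act P v)"
proof -
  have "act (pCons a P) v = (\<Sum>k\<le>Suc (degree P). sc (coeff (pCons a P) k) ((d ^^ k) v))"
    by (rule act_bnd) (simp add: degree_pCons_le)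
  also have "\<dots> = sc a v + (\<Sum>k\<le>degree P. sc (coeff P k) ((d ^^ Suc k) v))"
    by (subst sum.atMost_Suc_shift) simp
  also have "(\<Sum>k\<le>degree P. sc (coeff P k) ((d ^^ Suc k) v)) = d (act P v)"
    unfolding act_def lin_sum[OF dlin] by (simp add: lin_sc[OF dlin])
  finally show ?thesis .
qed

lemma act_0[simp]: "act 0 v = v - v" by (simp add: act_def)
lemma act_0'[simp]: "act 0 v = 0" by (simp add: act_def)

lemma act_lin: "Vector_Spaces.linear sc sc (act P)"
proof (induction P)
  case 0
  then show ?case unfolding Vector_Spaces.linear_iff by (simp add: vs)
next
  case (pCons a P)
  show ?case using pCons.IH dlin unfolding Vector_Spaces.linear_iff act_pCons
    by (simp add: V.scale_right_distrib V.scale_scale algebra_simps mult.commute)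
qed

lemma act_add2: "act P (v + w) = act P v + act P w" using lin_add[OF act_lin] .
lemma act_sc2: "act P (sc c v) = sc c (act P v)" using lin_sc[OF act_lin] .
lemma act_zero2[simp]: "act P 0 = 0" using lin_0[OF act_lin] .
lemma act_neg2: "act P (- v) = - act P v" using lin_neg[OF act_lin] .
lemma act_diff2: "act P (v - w) = act P v - act P w" using lin_diff[OF act_lin] .
lemma act_sum2: "act P (sum g A) = (\<Sum>a\<in>A. act P (g a))" using lin_sum[OF act_lin] .

lemma act_plus: "act (P + Q) v = act P v + act Q v"
proof (induction P arbitrary: Q)
  case 0
  then show ?case by simp
next
  case (pCons a P)
  show ?case
  proof (cases Q rule: pCons_cases)
    case (pCons b Q')
    have "act (P + Q') v = act P v + act Q' v" by (rule pCons.IH)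
    then show ?thesis using pCons
      by (simp add: act_pCons V.scale_left_distrib d_add algebra_simps)
  qed
qed

lemma act_smult: "act (smult a P) v = sc a (act P v)"
  by (induction P) (simp_all add: act_pCons V.scale_right_distrib lin_sc[OF dlin])

lemma act_const[simp]: "act [:a:] v = sc a v"
  by (simp add: act_pCons)

lemma act_1[simp]: "act 1 v = v"
  by (simp add: one_pCons)

lemma act_mult: "act (P * Q) v = act P (act Q v)"
proof (induction P)
  case 0
  then show ?case by simp
next
  case (pCons a P)
  show ?case
    by (simp add: act_plus act_smult act_pCons pCons.IH)
qed

lemma act_X: "act [:0, 1:] v = d v"
  by (simp add: act_pCons)

lemma act_minus: "act (- P) v = - act P v"
  using act_smult[of "-1" P v] by simp

lemma act_minusP: "act (P - Q) v = act P v - act Q v"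
  using act_plus[of P "- Q" v] act_minus by simp

lemma act_sumP: "finite A \<Longrightarrow> act (sum P A) v = (\<Sum>a\<in>A. act (P a) v)"
  by (induction A rule: finite_induct) (simp_all add: act_plus)

lemma act_Xpow: "act ([:0, 1:] ^ n) v = (d ^^ n) v"
  by (induction n) (simp_all add: act_mult act_X act_pCons)

lemma act_constpow: "act ([:a:] ^ n) v = sc (a ^ n) v"
  by (simp add: poly_const_pow)

end


context cmod begin

abbreviation subst where "subst \<equiv> subst_mdl sc d"

lemma subst_superset:
  assumes "finite S" "{k. p k \<noteq> 0} \<subseteq> S"
  shows "subst p i = (\<Sum>k\<in>S. sc ((-1) ^ k * of_nat (k choose i)) ((d ^^ (k - i)) (p k)))"
  unfolding subst_mdl_def
  by (rule sum.mono_neutral_left) (use assms in auto)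

lemma subst_bnd_eq: "bnd p N \<Longrightarrow> subst p i = (\<Sum>k\<le>N. sc ((-1) ^ k * of_nat (k choose i)) ((d ^^ (k - i)) (p k)))"
  by (rule subst_superset) (auto dest: bnd_supp)

lemma subst_bnd: assumes b: "bnd p N" shows "bnd (subst p) N"
  unfolding bnd_def
proof (intro allI impI)
  fix i assume i: "N < i"
  show "subst p i = 0" unfolding subst_bnd_eq[OF b]
    by (rule sum.neutral) (use i in auto)
qed

lemma subst_fin: "fin_poly p \<Longrightarrow> fin_poly (subst p)"
  using subst_bnd fin_poly_bnd by blast

lemma subst_add:
  assumes "fin_poly p" "fin_poly q"
  shows "subst (\<lambda>k. p k + q k) i = subst p i + subst q i"
proof -
  obtain N1 N2 where b1: "bnd p N1" and b2: "bnd q N2" using assms fin_poly_bnd by blast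
  let ?N = "max N1 N2"
  have bp: "bnd p ?N" and bq: "bnd q ?N" using bnd_mono[OF b1, of ?N] bnd_mono[OF b2, of ?N] by auto
  have bs: "bnd (\<lambda>k. p k + q k) ?N" using bp bq by (simp add: bnd_def)
  show ?thesis unfolding subst_bnd_eq[OF bp] subst_bnd_eq[OF bq] subst_bnd_eq[OF bs]
    by (simp add: lin_add[OF dpow_lin] V.scale_right_distrib sum.distrib)
qed

lemma subst_neg: "subst (\<lambda>k. - p k) i = - subst p i"
  unfolding subst_mdl_def by (simp add: lin_neg[OF dpow_lin] sum_negf)

lemma subst_diff:
  assumes "fin_poly p" "fin_poly q"
  shows "subst (\<lambda>k. p k - q k) i = subst p i - subst q i"
proof -
  have "fin_poly (\<lambda>k. - q k)" using assms(2) by (simp add: fin_poly_def)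
  then show ?thesis using subst_add[OF assms(1), of "\<lambda>k. - q k" i] subst_neg[of q i]
    by simp
qed

lemma subst_zero[simp]: "subst (\<lambda>k. 0) i = 0"
  unfolding subst_mdl_def by simp

definition ev :: "(nat \<Rightarrow> 'v) \<Rightarrow> complex poly \<Rightarrow> 'v" where
  "ev p P = (\<Sum>k\<in>{k. p k \<noteq> 0}. act (P ^ k) (p k))"

lemma ev_superset:
  assumes "finite S" "{k. p k \<noteq> 0} \<subseteq> S"
  shows "ev p P = (\<Sum>k\<in>S. act (P ^ k) (p k))"
  unfolding ev_def
  by (rule sum.mono_neutral_left[OF assms(1) assms(2)]) auto

lemma ev_bnd: "bnd p N \<Longrightarrow> ev p P = (\<Sum>k\<le>N. act (P ^ k) (p k))"
  by (rule ev_superset) (auto dest: bnd_supp)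

lemma ev_const: "ev p [:c:] = sev sc p c"
  unfolding ev_def sev_def by (simp add: act_constpow)

lemma ev_neg: "ev (\<lambda>k. - p k) P = - ev p P"
  unfolding ev_def by (simp add: act_neg2 sum_negf)

lemma binom_poly:
  fixes P :: "complex poly"
  assumes "k \<le> N"
  shows "(\<Sum>i\<le>N. smult ((-1) ^ k * of_nat (k choose i)) (P ^ i * [:0, 1:] ^ (k - i)))
         = (- [:0, 1:] - P) ^ k"
proof -
  have "(\<Sum>i\<le>N. smult ((-1) ^ k * of_nat (k choose i)) (P ^ i * [:0, 1:] ^ (k - i)))
      = (\<Sum>i\<le>k. smult ((-1) ^ k * of_nat (k choose i)) (P ^ i * [:0, 1:] ^ (k - i)))"
    by (rule sum.mono_neutral_right) (use assms in \<open>auto simp: binomial_eq_0 not_le\<close>)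
  also have "\<dots> = [:(-1) ^ k:] * (\<Sum>i\<le>k. of_nat (k choose i) * P ^ i * [:0, 1:] ^ (k - i))"
    by (simp add: sum_distrib_left of_nat_poly mult.assoc mult.commute)
  also have "\<dots> = [:(-1) ^ k:] * (P + [:0, 1:]) ^ k"
    by (simp add: binomial_ring)
  also have "\<dots> = (- [:0, 1:] - P) ^ k"
  proof -
    have m1: "(- 1 :: complex poly) ^ k = [:(-1) ^ k:]"
    proof -
      have "(- 1 :: complex poly) = [:-1:]" by (simp add: one_pCons)
      then show ?thesis by (simp add: poly_const_pow)
    qed
    have "(- [:0, 1:] - P) ^ k = (- (P + [:0, 1:])) ^ k" by (simp add: algebra_simps)
    also have "\<dots> = (- 1) ^ k * (P + [:0, 1:]) ^ k"
      using power_minus[of "P + [:0, 1:]" k] by simp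
    finally show ?thesis unfolding m1 by simp
  qed
  finally show ?thesis .
qed

lemma ev_subst:
  assumes b: "bnd p N"
  shows "ev (subst p) P = ev p (- [:0, 1:] - P)"
proof -
  have "ev (subst p) P = (\<Sum>i\<le>N. act (P ^ i) (subst p i))"
    by (rule ev_bnd[OF subst_bnd[OF b]])
  also have "\<dots> = (\<Sum>i\<le>N. \<Sum>k\<le>N. act (smult ((-1) ^ k * of_nat (k choose i)) (P ^ i * [:0, 1:] ^ (k - i))) (p k))"
    unfolding subst_bnd_eq[OF b] act_sum2
    by (simp add: act_mult act_Xpow act_sc2 act_smult)
  also have "\<dots> = (\<Sum>k\<le>N. \<Sum>i\<le>N. act (smult ((-1) ^ k * of_nat (k choose i)) (P ^ i * [:0, 1:] ^ (k - i))) (p k))"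
    by (rule sum.swap)
  also have "\<dots> = (\<Sum>k\<le>N. act ((- [:0, 1:] - P) ^ k) (p k))"
    by (rule sum.cong[OF refl], subst act_sumP[symmetric], simp, subst binom_poly, simp_all)
  also have "\<dots> = ev p (- [:0, 1:] - P)"
    by (rule ev_bnd[OF b, symmetric])
  finally show ?thesis .
qed

lemma two_pow_ne1: "(2::complex) ^ Suc k - 1 \<noteq> 0"
proof
  assume "(2::complex) ^ Suc k - 1 = 0"
  then have "(of_nat (2 ^ Suc k) :: complex) = of_nat 1" by simp
  then have "(2::nat) ^ Suc k = 1" using of_nat_eq_iff by blast
  then show False by simp
qed

lemma inj_sum:
  "(\<forall>c. c \<noteq> 0 \<longrightarrow> (\<Sum>k\<le>N. sc (c ^ k) (p k)) = 0) \<Longrightarrow> k \<le> N \<Longrightarrow> p k = 0"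
proof (induction N arbitrary: p k)
  case 0
  then show ?case using spec[OF 0(1), of 1] by simp
next
  case (Suc N)
  have S: "\<And>c. (\<Sum>k\<le>Suc N. sc (c ^ k) (p k)) = p 0 + (\<Sum>k\<le>N. sc (c ^ Suc k) (p (Suc k)))"
    by (subst sum.atMost_Suc_shift) simp
  define q where "q k = sc (2 ^ Suc k - 1) (p (Suc k))" for k
  have "\<forall>c. c \<noteq> 0 \<longrightarrow> (\<Sum>k\<le>N. sc (c ^ k) (q k)) = 0"
  proof (intro allI impI)
    fix c :: complex assume c: "c \<noteq> 0"
    have "sc c (\<Sum>k\<le>N. sc (c ^ k) (q k))
        = (\<Sum>k\<le>N. sc ((2 * c) ^ Suc k) (p (Suc k))) - (\<Sum>k\<le>N. sc (c ^ Suc k) (p (Suc k)))"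
      unfolding q_def V.scale_sum_right sum_subtractf[symmetric]
    proof (rule sum.cong[OF refl])
      fix k
      have e: "c * (c ^ k * (2 ^ Suc k - 1)) = (2 * c) ^ Suc k - c ^ Suc k"
        by (simp add: algebra_simps power_mult_distrib)
      show "sc c (sc (c ^ k) (sc (2 ^ Suc k - 1) (p (Suc k))))
          = sc ((2 * c) ^ Suc k) (p (Suc k)) - sc (c ^ Suc k) (p (Suc k))"
      proof -
        have "sc c (sc (c ^ k) (sc (2 ^ Suc k - 1) (p (Suc k)))) = sc (c * (c ^ k * (2 ^ Suc k - 1))) (p (Suc k))"
          by (simp only: V.scale_scale)
        also have "\<dots> = sc ((2 * c) ^ Suc k - c ^ Suc k) (p (Suc k))" by (simp only: e)
        finally show ?thesis by (simp only: V.scale_left_diff_distrib)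
      qed
    qed
    also have "\<dots> = 0"
    proof -
      have h1: "p 0 + (\<Sum>k\<le>N. sc (c ^ Suc k) (p (Suc k))) = 0"
        using Suc.prems(1)[rule_format, of c] c unfolding S .
      have h2: "p 0 + (\<Sum>k\<le>N. sc ((2 * c) ^ Suc k) (p (Suc k))) = 0"
        using Suc.prems(1)[rule_format, of "2 * c"] c unfolding S by simp
      have "(\<Sum>k\<le>N. sc ((2 * c) ^ Suc k) (p (Suc k))) - (\<Sum>k\<le>N. sc (c ^ Suc k) (p (Suc k)))
         = (p 0 + (\<Sum>k\<le>N. sc ((2 * c) ^ Suc k) (p (Suc k)))) - (p 0 + (\<Sum>k\<le>N. sc (c ^ Suc k) (p (Suc k))))"
        by (rule add_diff_cancel_left[symmetric])
      also have "\<dots> = 0" unfolding h1 h2 by simp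
      finally show ?thesis .
    qed
    finally show "(\<Sum>k\<le>N. sc (c ^ k) (q k)) = 0" using c by simp
  qed
  then have qz: "\<And>k. k \<le> N \<Longrightarrow> q k = 0" using Suc.IH by blast
  have pz: "\<And>k. k \<le> N \<Longrightarrow> p (Suc k) = 0"
    using qz two_pow_ne1 unfolding q_def by simp
  have "p 0 = 0"
    using Suc.prems(1)[rule_format, of 1] unfolding S by (simp add: pz)
  then show ?case using pz Suc.prems(2) by (cases k) auto
qed

lemma inj_sev: "bnd p N \<Longrightarrow> (\<And>c. sev sc p c = 0) \<Longrightarrow> p k = 0"
proof -
  assume b: "bnd p N" and h: "\<And>c. sev sc p c = 0"
  show "p k = 0"
  proof (cases "k \<le> N")
    case True
    then show ?thesis using inj_sum[of p N k] h sev_bnd[OF b] by auto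
  next
    case False
    then show ?thesis using b by (simp add: bnd_def)
  qed
qed

lemma sev_diff: "bnd p N \<Longrightarrow> bnd q N \<Longrightarrow> sev sc (\<lambda>k. p k - q k) c = sev sc p c - sev sc q c"
proof -
  assume bp: "bnd p N" and bq: "bnd q N"
  have b: "bnd (\<lambda>k. p k - q k) N" using bp bq by (simp add: bnd_def)
  show ?thesis unfolding sev_bnd[OF bp] sev_bnd[OF bq] sev_bnd[OF b]
    by (simp add: V.scale_right_diff_distrib sum_subtractf)
qed

lemma eq_by_sev: "bnd p N \<Longrightarrow> bnd q N \<Longrightarrow> (\<And>c. sev sc p c = sev sc q c) \<Longrightarrow> p = q"
proof
  fix k assume bp: "bnd p N" and bq: "bnd q N" and h: "\<And>c. sev sc p c = sev sc q c"
  have b: "bnd (\<lambda>k. p k - q k) N" using bp bq by (simp add: bnd_def)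
  have "(\<lambda>k. p k - q k) k = 0"
    by (rule inj_sev[OF b]) (simp add: sev_diff[OF bp bq] h)
  then show "p k = q k" by simp
qed

lemma subst_subst:
  assumes "fin_poly p"
  shows "subst (subst p) = p"
proof -
  obtain N where b: "bnd p N" using assms fin_poly_bnd by blast
  have b2: "bnd (subst (subst p)) N" using subst_bnd[OF subst_bnd[OF b]] .
  show ?thesis
  proof (rule eq_by_sev[OF b2 b])
    fix c
    have "sev sc (subst (subst p)) c = ev (subst (subst p)) [:c:]" by (simp add: ev_const)
    also have "\<dots> = ev p (- [:0, 1:] - (- [:0, 1:] - [:c:]))"
      by (simp add: ev_subst[OF subst_bnd[OF b]] ev_subst[OF b])
    also have "\<dots> = sev sc p c" by (simp add: ev_const)
    finally show "sev sc (subst (subst p)) c = sev sc p c" .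
  qed
qed

end


definition bnd2 :: "(nat \<Rightarrow> nat \<Rightarrow> 'v::zero) \<Rightarrow> nat \<Rightarrow> bool" where
  "bnd2 F N \<longleftrightarrow> (\<forall>i j. (N < i \<or> N < j) \<longrightarrow> F i j = 0)"

lemma bnd2_mono: "bnd2 F N \<Longrightarrow> N \<le> M \<Longrightarrow> bnd2 F M"
  by (auto simp: bnd2_def)

lemma bnd2_slice1: "bnd2 F N \<Longrightarrow> bnd (\<lambda>j. F i j) N"
  by (auto simp: bnd2_def bnd_def)
lemma bnd2_slice2: "bnd2 F N \<Longrightarrow> bnd (\<lambda>i. F i j) N"
  by (auto simp: bnd2_def bnd_def)

lemma bnd2_nest:
  assumes g: "fin_poly g" and B: "\<And>w. fin_poly (B w)" and B0: "\<And>i. B 0 i = 0"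
  shows "\<exists>N. bnd2 (\<lambda>i j. B (g j) i) N"
proof -
  obtain Ng where bg: "bnd g Ng" using g fin_poly_bnd by blast
  have "\<forall>j. \<exists>n. bnd (B (g j)) n" using B fin_poly_bnd by blast
  then obtain n where n: "\<And>j. bnd (B (g j)) (n j)" by metis
  define N where "N = Ng + (\<Sum>j\<le>Ng. n j)"
  have "bnd2 (\<lambda>i j. B (g j) i) N"
    unfolding bnd2_def
  proof (intro allI impI)
    fix i j assume h: "N < i \<or> N < j"
    show "B (g j) i = 0"
    proof (cases "Ng < j")
      case True
      then show ?thesis using bg B0 by (simp add: bnd_def)
    next
      case False
      then have "n j \<le> (\<Sum>j\<le>Ng. n j)" by (intro member_le_sum) auto
      then have "n j < i" using h False unfolding N_def by auto
      then show ?thesis using n[of j] by (simp add: bnd_def)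
    qed
  qed
  then show ?thesis by blast
qed

definition nmid :: "(complex \<Rightarrow> 'v::ab_group_add \<Rightarrow> 'v) \<Rightarrow> (nat \<Rightarrow> nat \<Rightarrow> 'v) \<Rightarrow> nat \<Rightarrow> nat \<Rightarrow> 'v" where
  "nmid sc f i j = (\<Sum>l\<in>{j..i+j}. sc (of_nat (l choose j)) (f (i + j - l) l))"

lemma nest_mid_nmid: "nest_mid sc B1 B2 a b c i j = nmid sc (\<lambda>k l. B1 (B2 a b k) c l) i j"
  unfolding nest_mid_def nmid_def by simp

context cmod begin

lemma sc_comm: "sc a (sc b v) = sc b (sc a v)"
  by (simp add: mult.commute)

lemma nmid_bnd: assumes "bnd2 f N0" shows "bnd2 (nmid sc f) (2 * N0)"
  unfolding bnd2_def
proof (intro allI impI)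
  fix i j assume h: "2 * N0 < i \<or> 2 * N0 < j"
  show "nmid sc f i j = 0" unfolding nmid_def
  proof (rule sum.neutral, intro ballI)
    fix l assume l: "l \<in> {j..i+j}"
    have "N0 < i + j - l \<or> N0 < l" using h l by auto
    then have "f (i + j - l) l = 0" using assms unfolding bnd2_def by blast
    then show "sc (of_nat (l choose j)) (f (i + j - l) l) = 0" by simp
  qed
qed

lemma act_binom:
  "act (P ^ k * (P + [:c:]) ^ l) v = (\<Sum>j\<le>l. sc (of_nat (l choose j) * c ^ j) (act (P ^ (k + l - j)) v))"
proof -
  have "(P + [:c:]) ^ l = (\<Sum>j\<le>l. of_nat (l choose j) * [:c:] ^ j * P ^ (l - j))"
    using binomial_ring[of "[:c:]" P l] by (simp add: add.commute)
  then have "P ^ k * (P + [:c:]) ^ l = (\<Sum>j\<le>l. smult (of_nat (l choose j) * c ^ j) (P ^ (k + l - j)))"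
    by (simp add: sum_distrib_left of_nat_poly poly_const_pow power_add[symmetric] mult.commute
        mult.left_commute)
  then show ?thesis by (simp add: act_sumP act_smult)
qed

lemma mid_eval:
  fixes P :: "complex poly"
  assumes f: "bnd2 f N0" and N: "2 * N0 \<le> N"
  shows "(\<Sum>i\<le>N. act (P ^ i) (\<Sum>j\<le>N. sc (c ^ j) (nmid sc f i j)))
       = (\<Sum>k\<le>N. \<Sum>l\<le>N. act (P ^ k * (P + [:c:]) ^ l) (f k l))"
proof -
  define h where "h = (\<lambda>(i::nat, j::nat, l::nat). sc (of_nat (l choose j) * c ^ j) (act (P ^ i) (f (i + j - l) l)))"
  define g where "g = (\<lambda>(k::nat, l::nat, j::nat). sc (of_nat (l choose j) * c ^ j) (act (P ^ (k + l - j)) (f k l)))"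
  define A where "A = Sigma {..N} (\<lambda>i. Sigma {..N} (\<lambda>j. {j..i+j}))"
  define B where "B = Sigma {..N} (\<lambda>k. Sigma {..N} (\<lambda>l. {..l}))"
  define A' where "A' = {(i, j, l). j \<le> l \<and> l \<le> i + j \<and> i + j - l \<le> N0 \<and> l \<le> N0}"
  define B' where "B' = {(k, l, j). k \<le> N0 \<and> l \<le> N0 \<and> j \<le> l}"
  have fA: "finite A" unfolding A_def by auto
  have fB: "finite B" unfolding B_def by auto
  have LHS: "(\<Sum>i\<le>N. act (P ^ i) (\<Sum>j\<le>N. sc (c ^ j) (nmid sc f i j))) = sum h A"
  proof -
    have "(\<Sum>i\<le>N. act (P ^ i) (\<Sum>j\<le>N. sc (c ^ j) (nmid sc f i j)))
        = (\<Sum>i\<le>N. \<Sum>j\<le>N. \<Sum>l\<in>{j..i+j}. h (i, j, l))"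
      unfolding nmid_def h_def act_sum2 V.scale_sum_right
      by (simp add: act_sc2 mult.commute)
    also have "\<dots> = (\<Sum>i\<le>N. \<Sum>(j, l)\<in>Sigma {..N} (\<lambda>j. {j..i+j}). h (i, j, l))"
      by (rule sum.cong[OF refl], rule sum.Sigma) auto
    also have "\<dots> = sum h A"
      unfolding A_def by (subst sum.Sigma) (auto simp: case_prod_beta)
    finally show ?thesis .
  qed
  have RHS: "(\<Sum>k\<le>N. \<Sum>l\<le>N. act (P ^ k * (P + [:c:]) ^ l) (f k l)) = sum g B"
  proof -
    have "(\<Sum>k\<le>N. \<Sum>l\<le>N. act (P ^ k * (P + [:c:]) ^ l) (f k l))
        = (\<Sum>k\<le>N. \<Sum>l\<le>N. \<Sum>j\<le>l. g (k, l, j))"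
      unfolding act_binom g_def by simp
    also have "\<dots> = (\<Sum>k\<le>N. \<Sum>(l, j)\<in>Sigma {..N} (\<lambda>l. {..l}). g (k, l, j))"
      by (rule sum.cong[OF refl], rule sum.Sigma) auto
    also have "\<dots> = sum g B"
      unfolding B_def by (subst sum.Sigma) (auto simp: case_prod_beta)
    finally show ?thesis .
  qed
  have "sum h A = sum h (A \<inter> A')"
  proof (rule sum.mono_neutral_right[OF fA])
    show "A \<inter> A' \<subseteq> A" by blast
    show "\<forall>x\<in>A - A \<inter> A'. h x = 0"
    proof
      fix x assume x: "x \<in> A - A \<inter> A'"
      obtain i j l where xe: "x = (i, j, l)" by (cases x) auto
      have "N0 < i + j - l \<or> N0 < l" using x unfolding xe A_def A'_def by auto
      then have "f (i + j - l) l = 0" using f unfolding bnd2_def by blast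
      then show "h x = 0" unfolding xe h_def by simp
    qed
  qed
  also have "\<dots> = sum g (B \<inter> B')"
  proof (rule sum.reindex_bij_witness[where i = "\<lambda>(k, l, j). (k + l - j, j, l)" and j = "\<lambda>(i, j, l). (i + j - l, l, j)"])
    fix a assume "a \<in> A \<inter> A'"
    then show "(case case a of (i, j, l) \<Rightarrow> (i + j - l, l, j) of (k, l, j) \<Rightarrow> (k + l - j, j, l)) = a"
      by (auto simp: A_def A'_def)
  next
    fix a assume "a \<in> A \<inter> A'"
    then show "(case a of (i, j, l) \<Rightarrow> (i + j - l, l, j)) \<in> B \<inter> B'"
      using N by (auto simp: A_def A'_def B_def B'_def)
  next
    fix b assume "b \<in> B \<inter> B'"
    then show "(case case b of (k, l, j) \<Rightarrow> (k + l - j, j, l) of (i, j, l) \<Rightarrow> (i + j - l, l, j)) = b"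
      by (auto simp: B_def B'_def)
  next
    fix b assume "b \<in> B \<inter> B'"
    then show "(case b of (k, l, j) \<Rightarrow> (k + l - j, j, l)) \<in> A \<inter> A'"
      using N by (auto simp: A_def A'_def B_def B'_def)
  next
    fix a assume "a \<in> A \<inter> A'"
    then show "g (case a of (i, j, l) \<Rightarrow> (i + j - l, l, j)) = h a"
      by (auto simp: A_def A'_def g_def h_def)
  qed
  also have "\<dots> = sum g B"
  proof (rule sum.mono_neutral_left[OF fB])
    show "B \<inter> B' \<subseteq> B" by blast
    show "\<forall>x\<in>B - B \<inter> B'. g x = 0"
    proof
      fix x assume x: "x \<in> B - B \<inter> B'"
      obtain k l j where xe: "x = (k, l, j)" by (cases x) auto
      have "N0 < k \<or> N0 < l" using x unfolding xe B_def B'_def by auto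
      then have "f k l = 0" using f unfolding bnd2_def by blast
      then show "g x = 0" unfolding xe g_def by simp
    qed
  qed
  finally show ?thesis using LHS RHS by simp
qed

end


locale lcpre = cmod sc d for sc :: "complex \<Rightarrow> 'v::ab_group_add \<Rightarrow> 'v" and d +
  fixes br :: "'v \<Rightarrow> 'v \<Rightarrow> nat \<Rightarrow> 'v"
  assumes lb: "lbracket sc sc sc br" and ses: "sesquilinear d d d br"
    and skew: "\<And>a b. br a b = (\<lambda>i. - subst_mdl sc d (br b a) i)"
begin

lemma br_fin: "fin_poly (br a b)" using lb by (simp add: lbracket_def)
lemma br_lin1: "Vector_Spaces.linear sc sc (\<lambda>a. br a b j)" using lb by (simp add: lbracket_def)
lemma br_lin2: "Vector_Spaces.linear sc sc (\<lambda>b. br a b j)" using lb by (simp add: lbracket_def)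

lemma br_zero1[simp]: "br 0 b j = 0" using lin_0[OF br_lin1] by simp
lemma br_zero2[simp]: "br a 0 j = 0" using lin_0[OF br_lin2] by simp
lemma br_add2: "br a (u + w) j = br a u j + br a w j" using lin_add[OF br_lin2] by simp
lemma br_sc2: "br a (sc c w) j = sc c (br a w j)" using lin_sc[OF br_lin2] by simp
lemma br_sum2: "br a (sum g A) j = (\<Sum>x\<in>A. br a (g x) j)" using lin_sum[OF br_lin2] by simp
lemma br_d2: "br a (d b) j = d (br a b j) + (if j = 0 then 0 else br a b (j - 1))"
  using ses by (simp add: sesquilinear_def)

definition bev :: "'v \<Rightarrow> 'v \<Rightarrow> complex \<Rightarrow> 'v" where
  "bev a w c = sev sc (br a w) c"

lemma bev_bnd: "bnd (br a w) N \<Longrightarrow> bev a w c = (\<Sum>j\<le>N. sc (c ^ j) (br a w j))"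
  unfolding bev_def by (rule sev_bnd)

lemma ex_bnd2: "\<exists>N. bnd (br a u) N \<and> bnd (br a w) N \<and> bnd (br a v) N"
proof -
  obtain N1 N2 N3 where "bnd (br a u) N1" "bnd (br a w) N2" "bnd (br a v) N3"
    using br_fin fin_poly_bnd by metis
  then show ?thesis by (meson bnd_mono max.cobounded1 max.cobounded2 order.trans)
qed

lemma bev_lin: "Vector_Spaces.linear sc sc (\<lambda>w. bev a w c)"
  unfolding Vector_Spaces.linear_iff
proof (intro conjI allI)
  show "vector_space sc" by (rule vs)
  show "vector_space sc" by (rule vs)
  fix x y
  obtain N where b: "bnd (br a x) N" "bnd (br a y) N" "bnd (br a (x + y)) N"
    using ex_bnd2 by blast
  show "bev a (x + y) c = bev a x c + bev a y c"
    unfolding bev_bnd[OF b(1)] bev_bnd[OF b(2)] bev_bnd[OF b(3)]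
    by (simp add: br_add2 V.scale_right_distrib sum.distrib)
next
  fix e x
  obtain N where b: "bnd (br a x) N" "bnd (br a (sc e x)) N" "bnd (br a x) N"
    using ex_bnd2 by blast
  show "bev a (sc e x) c = sc e (bev a x c)"
    unfolding bev_bnd[OF b(1)] bev_bnd[OF b(2)]
    by (simp add: br_sc2 V.scale_sum_right mult.commute)
qed

lemma bev_add2: "bev a (u + w) c = bev a u c + bev a w c" using lin_add[OF bev_lin] by simp
lemma bev_sc2: "bev a (sc e w) c = sc e (bev a w c)" using lin_sc[OF bev_lin] by simp
lemma bev_sum2: "bev a (sum g A) c = (\<Sum>x\<in>A. bev a (g x) c)" using lin_sum[OF bev_lin] by simp
lemma bev_neg2: "bev a (- w) c = - bev a w c" using lin_neg[OF bev_lin] by simp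
lemma bev_zero2[simp]: "bev a 0 c = 0" using lin_0[OF bev_lin] by simp

lemma bev_d: "bev a (d w) c = act [:c, 1:] (bev a w c)"
proof -
  obtain N where b: "bnd (br a w) N" using br_fin fin_poly_bnd by blast
  have b1: "bnd (br a (d w)) (Suc N)"
    using b unfolding bnd_def by (simp add: br_d2)
  have "bev a (d w) c = (\<Sum>j\<le>Suc N. sc (c ^ j) (d (br a w j) + (if j = 0 then 0 else br a w (j - 1))))"
    unfolding bev_bnd[OF b1] by (simp add: br_d2)
  also have "\<dots> = (\<Sum>j\<le>Suc N. sc (c ^ j) (d (br a w j))) + (\<Sum>j\<le>Suc N. sc (c ^ j) (if j = 0 then 0 else br a w (j - 1)))"
    by (simp add: V.scale_right_distrib sum.distrib)
  also have "(\<Sum>j\<le>Suc N. sc (c ^ j) (d (br a w j))) = d (bev a w c)"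
  proof -
    have bS: "bnd (br a w) (Suc N)" using b bnd_mono by fastforce
    show ?thesis unfolding bev_bnd[OF bS] lin_sum[OF dlin] by (simp add: lin_sc[OF dlin])
  qed
  also have "(\<Sum>j\<le>Suc N. sc (c ^ j) (if j = 0 then 0 else br a w (j - 1))) = sc c (bev a w c)"
    unfolding bev_bnd[OF b] V.scale_sum_right
    by (subst sum.atMost_Suc_shift) simp
  finally show ?thesis by (simp add: act_pCons add.commute)
qed

lemma bev_act: "bev a (act P w) c = act (pcompose P [:c, 1:]) (bev a w c)"
proof (induction P)
  case 0
  then show ?case by simp
next
  case (pCons e P)
  have "bev a (act (pCons e P) w) c = sc e (bev a w c) + act [:c, 1:] (bev a (act P w) c)"
    by (simp add: act_pCons bev_add2 bev_sc2 bev_d)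
  also have "\<dots> = act (pcompose (pCons e P) [:c, 1:]) (bev a w c)"
    by (simp only: pCons.IH pcompose_pCons act_plus act_mult act_const)
  finally show ?case .
qed

lemma bev_skew: "bev a b c = - ev (br b a) (- [:0, 1:] - [:c:])"
proof -
  obtain N where bN: "bnd (br b a) N" using br_fin fin_poly_bnd by blast
  have "bev a b c = sev sc (\<lambda>i. - subst (br b a) i) c"
    unfolding bev_def by (subst skew) (rule refl)
  also have "\<dots> = - sev sc (subst (br b a)) c"
    unfolding sev_def by (simp add: sum_negf)
  also have "\<dots> = - ev (subst (br b a)) [:c:]" by (simp add: ev_const)
  also have "\<dots> = - ev (br b a) (- [:0, 1:] - [:c:])" by (simp add: ev_subst[OF bN])
  finally show ?thesis .
qed

lemma bev_skew_bnd: "bnd (br b a) N \<Longrightarrow> bev a b c = - (\<Sum>k\<le>N. act ((- [:0, 1:] - [:c:]) ^ k) (br b a k))"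
  unfolding bev_skew by (simp add: ev_bnd)

end

lemma pcompose_pow: "pcompose (p ^ n) q = (pcompose p q) ^ n"
  by (induction n) (simp_all add: pcompose_mult pcompose_1)

lemma pcQ: fixes c e :: complex shows "pcompose (- [:0, 1:] - [:e:]) [:c, 1:] = - [:0, 1:] - [:c + e:]"
  by (simp add: pcompose_diff pcompose_uminus pcompose_pCons)


lemma bnd2_swap: "bnd2 F N \<Longrightarrow> bnd2 (\<lambda>i j. F j i) N"
  by (auto simp: bnd2_def)

lemma pcQ2: fixes c e :: complex shows "pcompose [:- e, - 1:] [:c, 1:] = [:- c - e, - 1:]"
  by (simp add: pcompose_pCons algebra_simps)

context lcpre begin

definition EE :: "nat \<Rightarrow> (nat \<Rightarrow> nat \<Rightarrow> 'v) \<Rightarrow> complex \<Rightarrow> complex \<Rightarrow> 'v" where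
  "EE N F c e = (\<Sum>i\<le>N. sc (c ^ i) (\<Sum>j\<le>N. sc (e ^ j) (F i j)))"

lemma EE_diff: "EE N (\<lambda>i j. F i j - G i j) c e = EE N F c e - EE N G c e"
  unfolding EE_def by (simp add: V.scale_right_diff_distrib sum_subtractf)

lemma EE_add: "EE N (\<lambda>i j. F i j + G i j) c e = EE N F c e + EE N G c e"
  unfolding EE_def by (simp add: V.scale_right_distrib sum.distrib)

lemma sum_sc_swap:
  "(\<Sum>i\<le>N. sc (c ^ i) (\<Sum>j\<le>N. sc (e ^ j) (F i j))) = (\<Sum>j\<le>N. sc (e ^ j) (\<Sum>i\<le>N. sc (c ^ i) (F i j)))"
  unfolding V.scale_sum_right by (subst sum.swap) (simp add: mult.commute)

lemma inj2:
  assumes b: "bnd2 F N" and h: "\<And>c e. EE N F c e = 0"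
  shows "F i j = 0"
proof -
  have inner: "(\<Sum>j\<le>N. sc (e ^ j) (F i j)) = 0" for e i
  proof (cases "i \<le> N")
    case True
    show ?thesis
      by (rule inj_sum[where p = "\<lambda>i. (\<Sum>j\<le>N. sc (e ^ j) (F i j))" and N = N, OF _ True])
         (use h in \<open>simp add: EE_def\<close>)
  next
    case False
    then show ?thesis using b by (simp add: bnd2_def)
  qed
  show ?thesis
  proof (cases "j \<le> N")
    case True
    show ?thesis
      by (rule inj_sum[where p = "\<lambda>j. F i j" and N = N, OF _ True]) (use inner in simp)
  next
    case False
    then show ?thesis using b by (simp add: bnd2_def)
  qed
qed

lemma nest_b2:
  "\<exists>N. bnd2 (\<lambda>i j. br u (br v w j) i) N"
  by (rule bnd2_nest[OF br_fin br_fin]) simp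

lemma nest_b2':
  "\<exists>N. bnd2 (\<lambda>k l. br (br u v k) w l) N"
proof -
  obtain N where "bnd2 (\<lambda>i j. br (br u v j) w i) N"
    using bnd2_nest[OF br_fin, of "\<lambda>a. br a w" u v] br_fin by auto
  then show ?thesis using bnd2_swap by fastforce
qed

lemma nest_b2'':
  "\<exists>N. bnd2 (\<lambda>i j. br u (br v w i) j) N"
proof -
  obtain N where "bnd2 (\<lambda>i j. br u (br v w j) i) N"
    using nest_b2 by blast
  then show ?thesis using bnd2_swap by fastforce
qed

lemma rot:
  assumes J: "\<And>i j. br x (br y z j) i = nmid sc (\<lambda>k l. br (br x y k) z l) i j + br y (br x z i) j"
  shows "br y (br z x j) i = nmid sc (\<lambda>k l. br (br y z k) x l) i j + br z (br y x i) j"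
proof -
  define L where "L = (\<lambda>i j. br x (br y z j) i)"
  define R where "R = (\<lambda>i j. br y (br x z i) j)"
  define f where "f = (\<lambda>k l. br (br x y k) z l)"
  define M where "M = nmid sc f"
  define L' where "L' = (\<lambda>i j. br y (br z x j) i)"
  define R' where "R' = (\<lambda>i j. br z (br y x i) j)"
  define f' where "f' = (\<lambda>k l. br (br y z k) x l)"
  define M' where "M' = nmid sc f'"
  obtain n1 where n1: "bnd2 L n1" unfolding L_def using nest_b2 by blast
  obtain n2 where n2: "bnd2 R n2" unfolding R_def using nest_b2'' by blast
  obtain n3 where n3: "bnd2 f n3" unfolding f_def using nest_b2' by blast
  obtain n4 where n4: "bnd2 L' n4" unfolding L'_def using nest_b2 by blast
  obtain n5 where n5: "bnd2 R' n5" unfolding R'_def using nest_b2'' by blast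
  obtain n6 where n6: "bnd2 f' n6" unfolding f'_def using nest_b2' by blast
  obtain n7 where n7: "bnd (br z x) n7" using br_fin fin_poly_bnd by blast
  obtain n8 where n8: "bnd (br x z) n8" using br_fin fin_poly_bnd by blast
  obtain n9 where n9: "bnd (br y x) n9" using br_fin fin_poly_bnd by blast
  obtain n10 where n10: "bnd (br x y) n10" using br_fin fin_poly_bnd by blast
  define N0 where "N0 = n1 + n2 + n3 + n4 + n5 + n6 + n7 + n8 + n9 + n10"
  define N where "N = 2 * N0"
  have NN: "2 * N0 \<le> N" unfolding N_def by simp
  have le: "n \<le> N0 \<Longrightarrow> n \<le> N" for n unfolding N_def by simp
  have bL: "bnd2 L N" using n1 le bnd2_mono unfolding N0_def by fastforce
  have bR: "bnd2 R N" using n2 le bnd2_mono unfolding N0_def by fastforce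
  have bf0: "bnd2 f N0" using n3 bnd2_mono unfolding N0_def by fastforce
  have bf: "bnd2 f N" using bf0 bnd2_mono NN by fastforce
  have bL': "bnd2 L' N" using n4 le bnd2_mono unfolding N0_def by fastforce
  have bR': "bnd2 R' N" using n5 le bnd2_mono unfolding N0_def by fastforce
  have bf0': "bnd2 f' N0" using n6 bnd2_mono unfolding N0_def by fastforce
  have bf': "bnd2 f' N" using bf0' bnd2_mono NN by fastforce
  have bzx: "bnd (br z x) N" using n7 le bnd_mono unfolding N0_def by fastforce
  have bxz: "bnd (br x z) N" using n8 le bnd_mono unfolding N0_def by fastforce
  have byx: "bnd (br y x) N" using n9 le bnd_mono unfolding N0_def by fastforce
  have bxy: "bnd (br x y) N" using n10 le bnd_mono unfolding N0_def by fastforce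
  have bM: "bnd2 M N" unfolding M_def N_def by (rule nmid_bnd[OF bf0])
  have bM': "bnd2 M' N" unfolding M'_def N_def by (rule nmid_bnd[OF bf0'])
  have sL': "bnd (br y (br z x j)) N" for j using bnd2_slice2[OF bL', of j] by (simp add: L'_def)
  have sR: "bnd (br y (br x z k)) N" for k using bnd2_slice1[OF bR, of k] by (simp add: R_def)
  have sR': "bnd (br z (br y x k)) N" for k using bnd2_slice1[OF bR', of k] by (simp add: R'_def)
  have sf: "bnd (br (br x y k) z) N" for k using bnd2_slice1[OF bf, of k] by (simp add: f_def)
  have sf': "bnd (br (br y z k) x) N" for k using bnd2_slice1[OF bf', of k] by (simp add: f'_def)
  have sL: "bnd (br x (br y z k)) N" for k using bnd2_slice2[OF bL, of k] by (simp add: L_def)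
  have main: "EE N (\<lambda>i j. L' i j - (M' i j + R' i j)) c e = 0" for c e
  proof -
    define Q where "Q = - [:0, 1:] - [:c + e:]"
    have ce: "- e - c = - c - e" by simp
    define S where "S = (\<lambda>(F :: nat \<Rightarrow> nat \<Rightarrow> 'v) (k::nat). (\<Sum>j\<le>N. sc (c ^ j) (F k j)))"
    have a: "EE N L' c e = - (\<Sum>k\<le>N. act (Q ^ k) (S R k))"
    proof -
      have "EE N L' c e = (\<Sum>j\<le>N. sc (e ^ j) (\<Sum>i\<le>N. sc (c ^ i) (br y (br z x j) i)))"
        unfolding EE_def L'_def by (rule sum_sc_swap)
      also have "\<dots> = (\<Sum>j\<le>N. sc (e ^ j) (bev y (br z x j) c))"
        by (simp add: bev_bnd[OF sL'])
      also have "\<dots> = bev y (bev z x e) c"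
        by (simp add: bev_bnd[OF bzx] bev_sum2 bev_sc2)
      also have "\<dots> = - (\<Sum>k\<le>N. act (Q ^ k) (bev y (br x z k) c))"
        by (simp add: bev_skew_bnd[OF bxz] bev_neg2 bev_sum2 bev_act pcompose_pow pcQ pcQ2 Q_def)
      also have "\<dots> = - (\<Sum>k\<le>N. act (Q ^ k) (S R k))"
        by (simp add: S_def R_def bev_bnd[OF sR])
      finally show ?thesis .
    qed
    have b: "EE N R' c e = (\<Sum>k\<le>N. act (Q ^ k) (S M k))"
    proof -
      have "EE N R' c e = (\<Sum>i\<le>N. sc (c ^ i) (bev z (br y x i) e))"
        unfolding EE_def by (simp add: R'_def bev_bnd[OF sR'])
      also have "\<dots> = bev z (bev y x c) e"
        by (simp add: bev_bnd[OF byx] bev_sum2 bev_sc2)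
      also have "\<dots> = - (\<Sum>k\<le>N. act (Q ^ k) (bev z (br x y k) e))"
        by (simp add: bev_skew_bnd[OF bxy] bev_neg2 bev_sum2 bev_act pcompose_pow pcQ pcQ2 Q_def ce)
      also have "\<dots> = (\<Sum>k\<le>N. \<Sum>l\<le>N. act (Q ^ k * (Q + [:c:]) ^ l) (f k l))"
      proof -
        have "Q + [:c:] = - [:0, 1:] - [:e:]" unfolding Q_def by simp
        then show ?thesis
          by (simp add: f_def bev_skew_bnd[OF sf] act_sum2 act_neg2 act_mult sum_negf)
      qed
      also have "\<dots> = (\<Sum>k\<le>N. act (Q ^ k) (S M k))"
        unfolding S_def M_def by (rule mid_eval[OF bf0 NN, symmetric])
      finally show ?thesis .
    qed
    have c: "EE N M' c e = - (\<Sum>k\<le>N. act (Q ^ k) (S L k))"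
    proof -
      have "EE N M' c e = (\<Sum>i\<le>N. act ([:c:] ^ i) (\<Sum>j\<le>N. sc (e ^ j) (M' i j)))"
        unfolding EE_def by (simp add: act_constpow)
      also have "\<dots> = (\<Sum>k\<le>N. \<Sum>l\<le>N. act ([:c:] ^ k * ([:c:] + [:e:]) ^ l) (f' k l))"
        unfolding M'_def by (rule mid_eval[OF bf0' NN])
      also have "\<dots> = (\<Sum>k\<le>N. sc (c ^ k) (\<Sum>l\<le>N. sc ((c + e) ^ l) (f' k l)))"
        by (simp add: act_mult act_constpow V.scale_sum_right)
      also have "\<dots> = (\<Sum>k\<le>N. sc (c ^ k) (bev (br y z k) x (c + e)))"
        by (simp add: f'_def bev_bnd[OF sf'])
      also have "\<dots> = (\<Sum>k\<le>N. sc (c ^ k) (- (\<Sum>i\<le>N. act (Q ^ i) (L i k))))"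
        by (simp add: L_def bev_skew_bnd[OF sL] Q_def)
      also have "\<dots> = - (\<Sum>i\<le>N. act (Q ^ i) (S L i))"
        unfolding S_def act_sum2 V.scale_sum_right V.scale_minus_right sum_negf
        by (subst sum.swap) (simp add: act_sc2)
      finally show ?thesis .
    qed
    have SL: "S L k = S M k + S R k" for k
      unfolding S_def L_def M_def R_def f_def using J
      by (simp add: V.scale_right_distrib sum.distrib)
    have "EE N (\<lambda>i j. L' i j - (M' i j + R' i j)) c e = EE N L' c e - (EE N M' c e + EE N R' c e)"
      by (simp add: EE_diff EE_add)
    also have "\<dots> = 0"
      unfolding a b c SL by (simp add: act_add2 sum.distrib)
    finally show ?thesis .
  qed
  have bD: "bnd2 (\<lambda>i j. L' i j - (M' i j + R' i j)) N"
    using bL' bM' bR' by (simp add: bnd2_def)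
  have "L' i j - (M' i j + R' i j) = 0"
    using inj2[OF bD main] by simp
  then show ?thesis unfolding L'_def M'_def R'_def f'_def by simp
qed

end


lemma cmodI: "cmod s d \<longleftrightarrow> cmodule s d"
  unfolding cmod_def cmodule_def by simp

lemma subst_cdlin:
  assumes c1: "cmod s1 d1" and c2: "cmod s2 d2" and f: "cd_linear s1 d1 s2 d2 f" and p: "fin_poly p"
  shows "f (subst_mdl s1 d1 p i) = subst_mdl s2 d2 (\<lambda>k. f (p k)) i"
proof -
  interpret A: cmod s1 d1 by (rule c1)
  interpret B: cmod s2 d2 by (rule c2)
  have flin: "Vector_Spaces.linear s1 s2 f" and fd: "\<And>a. f (d1 a) = d2 (f a)"
    using f by (auto simp: cd_linear_def)
  have fpow: "f ((d1 ^^ n) v) = (d2 ^^ n) (f v)" for n v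
    by (induction n) (simp_all add: fd)
  have fin: "finite {k. p k \<noteq> 0}" using p by (simp add: fin_poly_def)
  have sub: "{k. f (p k) \<noteq> 0} \<subseteq> {k. p k \<noteq> 0}" using lin_0[OF flin] by auto
  have "subst_mdl s2 d2 (\<lambda>k. f (p k)) i
      = (\<Sum>k\<in>{k. p k \<noteq> 0}. s2 ((-1) ^ k * of_nat (k choose i)) ((d2 ^^ (k - i)) (f (p k))))"
    by (rule B.subst_superset[OF fin sub])
  also have "\<dots> = f (subst_mdl s1 d1 p i)"
    unfolding subst_mdl_def lin_sum[OF flin] by (simp add: lin_sc[OF flin] fpow)
  finally show ?thesis by simp
qed

lemma cmod_prod:
  assumes c0: "cmod s0 d0" and c1: "cmod s1 d1"
  shows "cmod (sum_scale s0 s1) (sum_map d0 d1)"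
proof -
  interpret A: cmod s0 d0 by (rule c0)
  interpret B: cmod s1 d1 by (rule c1)
  have vsP: "vector_space (sum_scale s0 s1)"
    unfolding vector_space_def sum_scale_def
    by (simp add: A.V.scale_right_distrib B.V.scale_right_distrib A.V.scale_left_distrib
        B.V.scale_left_distrib prod_eq_iff)
  show ?thesis
    unfolding cmod_def Vector_Spaces.linear_iff
    using vsP by (simp add: sum_map_def sum_scale_def A.d_add B.d_add lin_sc[OF A.dlin] lin_sc[OF B.dlin])
qed

lemma nmid_fst: "fst (nmid (sum_scale s0 s1) F i j) = nmid s0 (\<lambda>k l. fst (F k l)) i j"
  unfolding nmid_def sum_scale_def fst_sum by simp
lemma nmid_snd: "snd (nmid (sum_scale s0 s1) F i j) = nmid s1 (\<lambda>k l. snd (F k l)) i j"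
  unfolding nmid_def sum_scale_def snd_sum by simp


lemma lb_lin1: "lbracket s1 s2 s3 br \<Longrightarrow> Vector_Spaces.linear s1 s3 (\<lambda>a. br a b j)"
  by (simp add: lbracket_def)
lemma lb_lin2: "lbracket s1 s2 s3 br \<Longrightarrow> Vector_Spaces.linear s2 s3 (\<lambda>b. br a b j)"
  by (simp add: lbracket_def)
lemma lb_fin: "lbracket s1 s2 s3 br \<Longrightarrow> fin_poly (br a b)"
  by (simp add: lbracket_def)

lemma fin_add: fixes f g :: "nat \<Rightarrow> 'v::monoid_add" shows "fin_poly f \<Longrightarrow> fin_poly g \<Longrightarrow> fin_poly (\<lambda>k. f k + g k)"
  unfolding fin_poly_def
  by (rule finite_subset[of _ "{k. f k \<noteq> 0} \<union> {k. g k \<noteq> 0}"]) auto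
lemma fin_neg: fixes f :: "nat \<Rightarrow> 'v::group_add" shows "fin_poly f \<Longrightarrow> fin_poly (\<lambda>k. - f k)"
  unfolding fin_poly_def neg_equal_0_iff_equal .
lemma fin_pair: "fin_poly f \<Longrightarrow> fin_poly g \<Longrightarrow> fin_poly (\<lambda>k. (f k, g k))"
  unfolding fin_poly_def
  by (rule finite_subset[of _ "{k. f k \<noteq> 0} \<union> {k. g k \<noteq> 0}"]) (auto simp: zero_prod_def)
lemma fin_fst: "fin_poly F \<Longrightarrow> fin_poly (\<lambda>k. fst (F k))"
  unfolding fin_poly_def by (rule finite_subset[of _ "{k. F k \<noteq> 0}"]) auto
lemma fin_snd: "fin_poly F \<Longrightarrow> fin_poly (\<lambda>k. snd (F k))"
  unfolding fin_poly_def by (rule finite_subset[of _ "{k. F k \<noteq> 0}"]) auto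
lemma fin_map: "Vector_Spaces.linear s1 s2 f \<Longrightarrow> fin_poly p \<Longrightarrow> fin_poly (\<lambda>k. f (p k))"
  unfolding fin_poly_def by (rule finite_subset[of _ "{k. p k \<noteq> 0}"]) (auto simp: lin_0)

locale S2 =
  fixes s0 :: "complex \<Rightarrow> 'a::ab_group_add \<Rightarrow> 'a" and d0 :: "'a \<Rightarrow> 'a"
    and s1 :: "complex \<Rightarrow> 'b::ab_group_add \<Rightarrow> 'b" and d1 :: "'b \<Rightarrow> 'b"
    and t :: "'b \<Rightarrow> 'a"
    and b00 :: "'a \<Rightarrow> 'a \<Rightarrow> nat \<Rightarrow> 'a" and b01 :: "'a \<Rightarrow> 'b \<Rightarrow> nat \<Rightarrow> 'b"
    and b10 :: "'b \<Rightarrow> 'a \<Rightarrow> nat \<Rightarrow> 'b"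
    and N0 :: "'a \<Rightarrow> 'a" and N1 :: "'b \<Rightarrow> 'b"
  assumes H: "strict_2term_nij_Linf s0 d0 s1 d1 t b00 b01 b10 N0 N1"
begin

lemma c0: "cmod s0 d0" using H unfolding strict_2term_nij_Linf_def cmodI by blast
lemma c1: "cmod s1 d1" using H unfolding strict_2term_nij_Linf_def cmodI by blast
lemma tl: "cd_linear s1 d1 s0 d0 t" using H unfolding strict_2term_nij_Linf_def by metis
lemma lb00: "lbracket s0 s0 s0 b00" using H unfolding strict_2term_nij_Linf_def by metis
lemma ses00: "sesquilinear d0 d0 d0 b00" using H unfolding strict_2term_nij_Linf_def by metis
lemma lb01: "lbracket s0 s1 s1 b01" using H unfolding strict_2term_nij_Linf_def by metis
lemma ses01: "sesquilinear d0 d1 d1 b01" using H unfolding strict_2term_nij_Linf_def by metis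
lemma lb10: "lbracket s1 s0 s1 b10" using H unfolding strict_2term_nij_Linf_def by metis
lemma ses10: "sesquilinear d1 d0 d1 b10" using H unfolding strict_2term_nij_Linf_def by metis
lemma N0l: "cd_linear s0 d0 s0 d0 N0" using H unfolding strict_2term_nij_Linf_def by metis
lemma N1l: "cd_linear s1 d1 s1 d1 N1" using H unfolding strict_2term_nij_Linf_def by metis
lemma sk01: "b01 p m = (\<lambda>i. - subst_mdl s1 d1 (b10 m p) i)" using H unfolding strict_2term_nij_Linf_def by metis
lemma sk00: "b00 p q = (\<lambda>i. - subst_mdl s0 d0 (b00 q p) i)" using H unfolding strict_2term_nij_Linf_def by metis
lemma tb: "t (b01 p m i) = b00 p (t m) i" using H unfolding strict_2term_nij_Linf_def by metis
lemma tt: "b01 (t m) n i = b10 m (t n) i" using H unfolding strict_2term_nij_Linf_def by metis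
lemma J00: "nest_left b00 b00 p q r i j - nest_mid s0 b00 b00 p q r i j - nest_right b00 b00 p q r i j = 0"
  using H unfolding strict_2term_nij_Linf_def by metis
lemma J01: "nest_left b01 b01 p q m i j - nest_mid s1 b01 b00 p q m i j - nest_right b01 b01 p q m i j = 0"
  using H unfolding strict_2term_nij_Linf_def by metis
lemma tN: "t (N1 m) = N0 (t m)" using H unfolding strict_2term_nij_Linf_def by metis
lemma Nij0: "N0 (b00 (N0 p) q i + b00 p (N0 q) i - N0 (b00 p q i)) = b00 (N0 p) (N0 q) i"
  using H unfolding strict_2term_nij_Linf_def by metis
lemma Nij1: "N1 (b01 (N0 p) m i + b01 p (N1 m) i - N1 (b01 p m i)) = b01 (N0 p) (N1 m) i"
  using H unfolding strict_2term_nij_Linf_def by metis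

sublocale A: cmod s0 d0 by (rule c0)
sublocale B: cmod s1 d1 by (rule c1)

lemma tlin: "Vector_Spaces.linear s1 s0 t" using tl by (simp add: cd_linear_def)
lemma td: "t (d1 m) = d0 (t m)" using tl by (simp add: cd_linear_def)
lemma t_add: "t (m + n) = t m + t n" using lin_add[OF tlin] .
lemma t_sc: "t (s1 c m) = s0 c (t m)" using lin_sc[OF tlin] .
lemma t_0[simp]: "t 0 = 0" using lin_0[OF tlin] .
lemma t_diff: "t (m - n) = t m - t n" using lin_diff[OF tlin] .
lemma t_neg: "t (- m) = - t m" using lin_neg[OF tlin] .

lemmas b00_1 = lb_lin1[OF lb00] and b00_2 = lb_lin2[OF lb00]
lemmas b01_1 = lb_lin1[OF lb01] and b01_2 = lb_lin2[OF lb01]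
lemmas b10_1 = lb_lin1[OF lb10] and b10_2 = lb_lin2[OF lb10]

lemma b00_add1: "b00 (p + p') q i = b00 p q i + b00 p' q i" using lin_add[OF b00_1] by simp
lemma b00_add2: "b00 p (q + q') i = b00 p q i + b00 p q' i" using lin_add[OF b00_2] by simp
lemma b01_add1: "b01 (p + p') q i = b01 p q i + b01 p' q i" using lin_add[OF b01_1] by simp
lemma b01_add2: "b01 p (q + q') i = b01 p q i + b01 p q' i" using lin_add[OF b01_2] by simp
lemma b10_add1: "b10 (p + p') q i = b10 p q i + b10 p' q i" using lin_add[OF b10_1] by simp
lemma b10_add2: "b10 p (q + q') i = b10 p q i + b10 p q' i" using lin_add[OF b10_2] by simp
lemma b00_sc1: "b00 (s0 c p) q i = s0 c (b00 p q i)" using lin_sc[OF b00_1] by simp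
lemma b00_sc2: "b00 p (s0 c q) i = s0 c (b00 p q i)" using lin_sc[OF b00_2] by simp
lemma b01_sc1: "b01 (s0 c p) q i = s1 c (b01 p q i)" using lin_sc[OF b01_1] by simp
lemma b01_sc2: "b01 p (s1 c q) i = s1 c (b01 p q i)" using lin_sc[OF b01_2] by simp
lemma b10_sc1: "b10 (s1 c p) q i = s1 c (b10 p q i)" using lin_sc[OF b10_1] by simp
lemma b10_sc2: "b10 p (s0 c q) i = s1 c (b10 p q i)" using lin_sc[OF b10_2] by simp
lemma b00_01[simp]: "b00 0 q i = 0" using lin_0[OF b00_1] by simp
lemma b00_02[simp]: "b00 p 0 i = 0" using lin_0[OF b00_2] by simp
lemma b01_01[simp]: "b01 0 q i = 0" using lin_0[OF b01_1] by simp
lemma b01_02[simp]: "b01 p 0 i = 0" using lin_0[OF b01_2] by simp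
lemma b10_01[simp]: "b10 0 q i = 0" using lin_0[OF b10_1] by simp
lemma b10_02[simp]: "b10 p 0 i = 0" using lin_0[OF b10_2] by simp
lemma b00_fin: "fin_poly (b00 p q)" using lb_fin[OF lb00] .
lemma b01_fin: "fin_poly (b01 p q)" using lb_fin[OF lb01] .
lemma b10_fin: "fin_poly (b10 p q)" using lb_fin[OF lb10] .

lemma F1: "b10 m q i = - subst_mdl s1 d1 (b01 q m) i"
proof -
  have "subst_mdl s1 d1 (b01 q m) i = subst_mdl s1 d1 (\<lambda>k. - subst_mdl s1 d1 (b10 m q) k) i"
    by (subst sk01) (rule refl)
  also have "\<dots> = - b10 m q i"
    by (simp add: B.subst_neg B.subst_subst[OF b10_fin])
  finally show ?thesis by simp
qed

lemma F1': "subst_mdl s1 d1 (b10 m p) i = - b01 p m i"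
  by (subst sk01) simp

abbreviation sP where "sP \<equiv> sum_scale s0 s1"
abbreviation dP where "dP \<equiv> sum_map d0 d1"
abbreviation BR where "BR \<equiv> sum_bracket s1 d1 t b00 b01"

lemma BRp: "BR (p, m) (q, n) i = (b00 p q i, b01 (p + t m) n i + b10 m q i)"
  unfolding sum_bracket_def by (simp add: F1 b01_add1 algebra_simps)

lemma BR_eq: "BR x y i = (b00 (fst x) (fst y) i, b01 (fst x + t (snd x)) (snd y) i + b10 (snd x) (fst y) i)"
  using BRp[of "fst x" "snd x" "fst y" "snd y" i] by simp

lemma F3: "t (b10 m q i) = b00 (t m) q i"
proof -
  have "t (b10 m q i) = - t (subst_mdl s1 d1 (b01 q m) i)" by (simp add: F1 t_neg)
  also have "\<dots> = - subst_mdl s0 d0 (\<lambda>k. t (b01 q m k)) i"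
    by (simp add: subst_cdlin[OF c1 c0 tl b01_fin])
  also have "\<dots> = b00 (t m) q i"
    by (simp add: tb) (subst (2) sk00, simp)
  finally show ?thesis .
qed

end


context S2 begin

lemma cP: "cmod sP dP" by (rule cmod_prod[OF c0 c1])
lemma vsP: "vector_space sP" using cP by (simp add: cmod_def)

lemma ses00_1: "b00 (d0 p) q j = - (if j = 0 then 0 else b00 p q (j - 1))"
  using ses00 by (simp add: sesquilinear_def)
lemma ses00_2: "b00 p (d0 q) j = d0 (b00 p q j) + (if j = 0 then 0 else b00 p q (j - 1))"
  using ses00 by (simp add: sesquilinear_def)
lemma ses01_1: "b01 (d0 p) q j = - (if j = 0 then 0 else b01 p q (j - 1))"
  using ses01 by (simp add: sesquilinear_def)
lemma ses01_2: "b01 p (d1 q) j = d1 (b01 p q j) + (if j = 0 then 0 else b01 p q (j - 1))"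
  using ses01 by (simp add: sesquilinear_def)
lemma ses10_1: "b10 (d1 p) q j = - (if j = 0 then 0 else b10 p q (j - 1))"
  using ses10 by (simp add: sesquilinear_def)
lemma ses10_2: "b10 p (d0 q) j = d1 (b10 p q j) + (if j = 0 then 0 else b10 p q (j - 1))"
  using ses10 by (simp add: sesquilinear_def)

lemma BR_fun: "BR x y = (\<lambda>i. (b00 (fst x) (fst y) i, b01 (fst x + t (snd x)) (snd y) i + b10 (snd x) (fst y) i))"
  by (rule ext) (rule BR_eq)

lemma BR_fin: "fin_poly (BR x y)"
  unfolding BR_fun by (intro fin_pair fin_add b00_fin b01_fin b10_fin)

lemma BR_lin1: "Vector_Spaces.linear sP sP (\<lambda>x. BR x y j)"
  unfolding Vector_Spaces.linear_iff
proof (intro conjI allI)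
  show "vector_space sP" by (rule vsP)
  show "vector_space sP" by (rule vsP)
  fix x1 x2
  show "BR (x1 + x2) y j = BR x1 y j + BR x2 y j"
    unfolding BR_eq by (simp add: b00_add1 b01_add1 b10_add1 t_add algebra_simps)
next
  fix c x
  show "BR (sP c x) y j = sP c (BR x y j)"
    unfolding BR_eq sum_scale_def
    by (simp add: b00_sc1 b10_sc1 t_sc B.V.scale_right_distrib flip: A.V.scale_right_distrib b01_sc1)
qed

lemma BR_lin2: "Vector_Spaces.linear sP sP (\<lambda>y. BR x y j)"
  unfolding Vector_Spaces.linear_iff
proof (intro conjI allI)
  show "vector_space sP" by (rule vsP)
  show "vector_space sP" by (rule vsP)
  fix y1 y2
  show "BR x (y1 + y2) j = BR x y1 j + BR x y2 j"
    unfolding BR_eq by (simp add: b00_add2 b01_add2 b10_add2 algebra_simps)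
next
  fix c y
  show "BR x (sP c y) j = sP c (BR x y j)"
    unfolding BR_eq sum_scale_def
    by (simp add: b00_sc2 b01_sc2 b10_sc2 B.V.scale_right_distrib)
qed

lemma BR_lb: "lbracket sP sP sP BR"
  unfolding lbracket_def using BR_fin BR_lin1 BR_lin2 by blast

lemma BR_ses: "sesquilinear dP dP dP BR"
  unfolding sesquilinear_def
proof (intro conjI allI)
  fix x y j
  show "BR (dP x) y j = - (if j = 0 then 0 else BR x y (j - 1))"
  proof -
    have e: "d0 (fst x) + t (d1 (snd x)) = d0 (fst x + t (snd x))" by (simp add: td A.d_add)
    show ?thesis unfolding BR_eq sum_map_def
      by (cases j) (simp_all add: e ses00_1 ses01_1 ses10_1 zero_prod_def)
  qed
  show "BR x (dP y) j = dP (BR x y j) + (if j = 0 then 0 else BR x y (j - 1))"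
    unfolding BR_eq sum_map_def
    by (cases j) (simp_all add: ses00_2 ses01_2 ses10_2 B.d_add algebra_simps zero_prod_def)
qed

lemma fst_cdl: "cd_linear sP dP s0 d0 fst"
  unfolding cd_linear_def Vector_Spaces.linear_iff
  using vsP A.vs by (simp add: sum_scale_def sum_map_def)
lemma snd_cdl: "cd_linear sP dP s1 d1 snd"
  unfolding cd_linear_def Vector_Spaces.linear_iff
  using vsP B.vs by (simp add: sum_scale_def sum_map_def)

lemma substP: "fin_poly F \<Longrightarrow> subst_mdl sP dP F i = (subst_mdl s0 d0 (\<lambda>k. fst (F k)) i, subst_mdl s1 d1 (\<lambda>k. snd (F k)) i)"
  using subst_cdlin[OF cP c0 fst_cdl] subst_cdlin[OF cP c1 snd_cdl] by (simp add: prod_eq_iff)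

lemma F1s: "subst_mdl s1 d1 (b01 q m) i = - b10 m q i"
  by (simp add: F1)

lemma BR_skew: "BR x y = (\<lambda>i. - subst_mdl sP dP (BR y x) i)"
proof (rule ext)
  fix i
  obtain p m where x: "x = (p, m)" by (cases x)
  obtain q n where y: "y = (q, n)" by (cases y)
  have s1: "subst_mdl s1 d1 (\<lambda>k. b01 (q + t n) m k + b10 n p k) i = - b10 m (q + t n) i - b01 p n i"
    by (simp add: B.subst_add[OF b01_fin b10_fin] F1s F1')
  have s0: "subst_mdl s0 d0 (\<lambda>k. b00 q p k) i = - b00 p q i"
    by (subst (2) sk00) simp
  have e: "(\<lambda>k. snd (BR y x k)) = (\<lambda>k. b01 (q + t n) m k + b10 n p k)" by (simp add: x y BRp)
  have e0: "(\<lambda>k. fst (BR y x k)) = b00 q p" by (simp add: x y BRp)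
  show "BR x y i = - subst_mdl sP dP (BR y x) i"
    unfolding substP[OF BR_fin] e e0 s1 s0
    by (simp add: x y BRp b10_add2 b01_add1 tt algebra_simps)
qed

sublocale P: lcpre sP dP BR
  unfolding lcpre_def lcpre_axioms_def using cP BR_lb BR_ses BR_skew by blast

end


context cmod begin
lemma nmid_add: "nmid sc (\<lambda>k l. F k l + G k l) i j = nmid sc F i j + nmid sc G i j"
  unfolding nmid_def by (simp add: V.scale_right_distrib sum.distrib)
lemma nmid_zero: "nmid sc (\<lambda>k l. 0) i j = 0"
  unfolding nmid_def by simp
end

context S2 begin

definition Dj where
  "Dj x y z i j = BR x (BR y z j) i - nmid sP (\<lambda>k l. BR (BR x y k) z l) i j - BR y (BR x z i) j"

lemma BR_add1: "BR (x1 + x2) y i = BR x1 y i + BR x2 y i" using lin_add[OF P.br_lin1] by simp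
lemma BR_add2: "BR x (y1 + y2) i = BR x y1 i + BR x y2 i" using lin_add[OF P.br_lin2] by simp

lemma BR_add1f: "BR (x1 + x2) y = (\<lambda>i. BR x1 y i + BR x2 y i)" by (rule ext) (rule BR_add1)
lemma BR_add2f: "BR x (y1 + y2) = (\<lambda>i. BR x y1 i + BR x y2 i)" by (rule ext) (rule BR_add2)

lemma Dj_add1: "Dj (x1 + x2) y z i j = Dj x1 y z i j + Dj x2 y z i j"
  unfolding Dj_def by (simp add: BR_add1 BR_add2 BR_add1f BR_add2f P.nmid_add algebra_simps)
lemma Dj_add2: "Dj x (y1 + y2) z i j = Dj x y1 z i j + Dj x y2 z i j"
  unfolding Dj_def by (simp add: BR_add1 BR_add2 BR_add1f BR_add2f P.nmid_add algebra_simps)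
lemma Dj_add3: "Dj x y (z1 + z2) i j = Dj x y z1 i j + Dj x y z2 i j"
  unfolding Dj_def by (simp add: BR_add1 BR_add2 BR_add1f BR_add2f P.nmid_add algebra_simps)

lemma Dj_rot: assumes "\<And>i j. Dj x y z i j = 0" shows "Dj y z x i j = 0"
proof -
  have "\<And>i j. BR x (BR y z j) i = nmid sP (\<lambda>k l. BR (BR x y k) z l) i j + BR y (BR x z i) j"
    using assms unfolding Dj_def by (simp add: algebra_simps)
  then have "BR y (BR z x j) i = nmid sP (\<lambda>k l. BR (BR y z k) x l) i j + BR z (BR y x i) j"
    by (rule P.rot)
  then show ?thesis unfolding Dj_def by simp
qed

lemma tcomb: "b00 p q a + t (b01 (p + t m) n a + b10 m q a) = b00 (p + t m) (q + t n) a"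
  by (simp add: t_add tb F3 b00_add1 b00_add2 algebra_simps)

lemma JL1: "Dj (p, m) (q, n) (0, k) i j = 0"
proof -
  define P' where "P' = p + t m"
  define Q' where "Q' = q + t n"
  have e1: "BR (q, n) (0, k) j = (0, b01 Q' k j)" for j unfolding Q'_def zero_prod_def[symmetric] by (simp add: BRp)
  have e1': "BR (p, m) (0, k) j = (0, b01 P' k j)" for j unfolding P'_def by (simp add: BRp)
  have e2: "BR (p, m) (0, w) i = (0, b01 P' w i)" for w i unfolding P'_def by (simp add: BRp)
  have e2': "BR (q, n) (0, w) i = (0, b01 Q' w i)" for w i unfolding Q'_def by (simp add: BRp)
  have e3: "BR (BR (p, m) (q, n) a) (0, k) l = (0, b01 (b00 P' Q' a) k l)" for a l
    unfolding BR_eq[of "BR (p, m) (q, n) a"] unfolding P'_def Q'_def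
    by (simp add: BRp tcomb[symmetric])
  have J: "b01 P' (b01 Q' k j) i - nmid s1 (\<lambda>a l. b01 (b00 P' Q' a) k l) i j - b01 Q' (b01 P' k i) j = 0"
    using J01[of P' Q' k i j] unfolding nest_left_def nest_right_def nest_mid_nmid .
  show ?thesis
    unfolding Dj_def
    by (simp add: prod_eq_iff e1 e1' e2 e2' e3 nmid_fst nmid_snd A.nmid_zero J)
qed

lemma JL0: "Dj (p, 0) (q, 0) (r, 0) i j = 0"
proof -
  have e: "BR (a, 0) (b, 0) i = (b00 a b i, 0)" for a b i by (simp add: BRp)
  have J: "b00 p (b00 q r j) i - nmid s0 (\<lambda>a l. b00 (b00 p q a) r l) i j - b00 q (b00 p r i) j = 0"
    using J00[of p q r i j] unfolding nest_left_def nest_right_def nest_mid_nmid .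
  show ?thesis
    unfolding Dj_def
    by (simp add: prod_eq_iff e nmid_fst nmid_snd B.nmid_zero J)
qed

lemma Dj_all: "Dj x y z i j = 0"
proof -
  have D1: "Dj x y (0, k) i j = 0" for x y k i j
    using JL1[of "fst x" "snd x" "fst y" "snd y" k i j] by simp
  have D2: "Dj (0, k) x y i j = 0" for x y k i j
  proof -
    have "Dj y (0, k) x i j = 0" for i j by (rule Dj_rot) (rule D1)
    then show ?thesis by (rule Dj_rot)
  qed
  have D3: "Dj x (0, k) y i j = 0" for x y k i j
    by (rule Dj_rot) (rule D1)
  obtain p m where x: "x = (p, 0) + (0, m)" by (cases x) simp
  obtain q n where y: "y = (q, 0) + (0, n)" by (cases y) simp
  obtain r k where z: "z = (r, 0) + (0, k)" by (cases z) simp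
  show ?thesis
    unfolding x y z Dj_add1 Dj_add2 Dj_add3 by (simp add: D1 D2 D3 JL0)
qed

lemma BR_jacobi: "nest_left BR BR x y z = (\<lambda>i j. nest_mid sP BR BR x y z i j + nest_right BR BR x y z i j)"
proof (intro ext)
  fix i j
  show "nest_left BR BR x y z i j = nest_mid sP BR BR x y z i j + nest_right BR BR x y z i j"
    using Dj_all[of x y z i j] unfolding Dj_def nest_left_def nest_right_def nest_mid_nmid
    by (simp add: algebra_simps)
qed

end


context S2 begin

lemma N0lin: "Vector_Spaces.linear s0 s0 N0" using N0l by (simp add: cd_linear_def)
lemma N1lin: "Vector_Spaces.linear s1 s1 N1" using N1l by (simp add: cd_linear_def)
lemma N0d: "N0 (d0 a) = d0 (N0 a)" using N0l by (simp add: cd_linear_def)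
lemma N1d: "N1 (d1 a) = d1 (N1 a)" using N1l by (simp add: cd_linear_def)

lemma lin_rearr:
  assumes f: "Vector_Spaces.linear s1 s1 f"
  shows "f (A + B + (C + D) - f (E + F)) = f (A + C - f E) + f (B + D - f F)"
proof -
  have h: "A + B + (C + D) - f (E + F) = (A + C - f E) + (B + D - f F)"
    unfolding lin_add[OF f] by (simp add: algebra_simps)
  show ?thesis unfolding h by (rule lin_add[OF f])
qed

lemma NP_cdl: "cd_linear sP dP sP dP (sum_map N0 N1)"
  unfolding cd_linear_def Vector_Spaces.linear_iff
  using vsP by (simp add: sum_scale_def sum_map_def lin_add[OF N0lin] lin_add[OF N1lin]
      lin_sc[OF N0lin] lin_sc[OF N1lin] N0d N1d)

lemma grp_id: fixes a b c :: "'c::ab_group_add" shows "a + b - c = - (- b - a + c)"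
  by (simp add: algebra_simps)

lemma Nij10: "N1 (b10 (N1 m) q j + b10 m (N0 q) j - N1 (b10 m q j)) = b10 (N1 m) (N0 q) j"
proof -
  define G where "G = (\<lambda>k. b01 (N0 q) m k + b01 q (N1 m) k - N1 (b01 q m k))"
  have fG1: "fin_poly (\<lambda>k. b01 (N0 q) m k + b01 q (N1 m) k)" by (intro fin_add b01_fin)
  have fG2: "fin_poly (\<lambda>k. N1 (b01 q m k))" by (rule fin_map[OF N1lin b01_fin])
  have fG: "fin_poly G" unfolding G_def diff_conv_add_uminus
    by (rule fin_add[OF fG1 fin_neg[OF fG2]])
  have e: "b01 (N0 q) (N1 m) = (\<lambda>k. N1 (G k))" unfolding G_def by (rule ext) (simp add: Nij1)
  have "b10 (N1 m) (N0 q) j = - subst_mdl s1 d1 (\<lambda>k. N1 (G k)) j" by (simp add: F1 e)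
  also have "\<dots> = - N1 (subst_mdl s1 d1 G j)" by (simp add: subst_cdlin[OF c1 c1 N1l fG])
  also have "subst_mdl s1 d1 G j = - b10 m (N0 q) j - b10 (N1 m) q j + N1 (b10 m q j)"
  proof -
    have "subst_mdl s1 d1 G j = subst_mdl s1 d1 (\<lambda>k. b01 (N0 q) m k + b01 q (N1 m) k) j
        - subst_mdl s1 d1 (\<lambda>k. N1 (b01 q m k)) j"
      unfolding G_def by (rule B.subst_diff[OF fG1 fG2])
    also have "\<dots> = - b10 m (N0 q) j - b10 (N1 m) q j + N1 (b10 m q j)"
      by (simp add: B.subst_add[OF b01_fin b01_fin] subst_cdlin[OF c1 c1 N1l b01_fin, symmetric]
          F1s lin_neg[OF N1lin])
    finally show ?thesis .
  qed
  finally have fin: "b10 (N1 m) (N0 q) j = - N1 (- b10 m (N0 q) j - b10 (N1 m) q j + N1 (b10 m q j))" .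
  have hX: "b10 (N1 m) q j + b10 m (N0 q) j - N1 (b10 m q j)
      = - (- b10 m (N0 q) j - b10 (N1 m) q j + N1 (b10 m q j))"
    by (rule grp_id)
  show ?thesis unfolding hX lin_neg[OF N1lin] fin[symmetric] ..
qed

lemma NP_nij: "BR (sum_map N0 N1 x) (sum_map N0 N1 y) j
   = sum_map N0 N1 (BR (sum_map N0 N1 x) y j + BR x (sum_map N0 N1 y) j - sum_map N0 N1 (BR x y j))"
proof -
  obtain p m where x: "x = (p, m)" by (cases x)
  obtain q n where y: "y = (q, n)" by (cases y)
  define P' where "P' = p + t m"
  have e: "N0 p + t (N1 m) = N0 P'" unfolding P'_def by (simp add: tN lin_add[OF N0lin])
  have e2: "p + t m = P'" unfolding P'_def ..
  have fstp: "b00 (N0 p) (N0 q) j = N0 (b00 (N0 p) q j + b00 p (N0 q) j - N0 (b00 p q j))"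
    using Nij0[of p q j] by simp
  have sndp: "b01 (N0 P') (N1 n) j + b10 (N1 m) (N0 q) j
     = N1 (b01 (N0 P') n j + b10 (N1 m) q j + (b01 P' (N1 n) j + b10 m (N0 q) j)
           - N1 (b01 P' n j + b10 m q j))"
    unfolding Nij1[of P', symmetric] Nij10[symmetric] by (rule lin_rearr[OF N1lin, symmetric])
  show ?thesis
    unfolding x y sum_map_def
    by (simp add: BRp e e2 fstp sndp)
qed

lemma main: "nijenhuis_lie_conformal sP dP BR (sum_map N0 N1)"
  unfolding nijenhuis_lie_conformal_def lie_conformal_def nijenhuis_op_def
proof (intro conjI allI)
  show "cmodule sP dP" using cP by (simp add: cmodI)
  show "lbracket sP sP sP BR" by (rule BR_lb)
  show "sesquilinear dP dP dP BR" by (rule BR_ses)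
  show "cd_linear sP dP sP dP (sum_map N0 N1)" by (rule NP_cdl)
  fix a b
  show "BR a b = (\<lambda>i. - subst_mdl sP dP (BR b a) i)" by (rule BR_skew)
  fix c
  show "nest_left BR BR a b c = (\<lambda>i j. nest_mid sP BR BR a b c i j + nest_right BR BR a b c i j)"
    by (rule BR_jacobi)
next
  fix p q j
  show "BR (sum_map N0 N1 p) (sum_map N0 N1 q) j = sum_map N0 N1 (BR (sum_map N0 N1 p) q j + BR p (sum_map N0 N1 q) j - sum_map N0 N1 (BR p q j))"
    by (rule NP_nij)
qed

end

theorem proposition4p11:
  fixes s0 :: "complex \<Rightarrow> 'a::ab_group_add \<Rightarrow> 'a" and d0 :: "'a \<Rightarrow> 'a"
    and s1 :: "complex \<Rightarrow> 'b::ab_group_add \<Rightarrow> 'b" and d1 :: "'b \<Rightarrow> 'b"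
    and t :: "'b \<Rightarrow> 'a"
    and b00 :: "'a \<Rightarrow> 'a \<Rightarrow> nat \<Rightarrow> 'a" and b01 :: "'a \<Rightarrow> 'b \<Rightarrow> nat \<Rightarrow> 'b"
    and b10 :: "'b \<Rightarrow> 'a \<Rightarrow> nat \<Rightarrow> 'b"
    and N0 :: "'a \<Rightarrow> 'a" and N1 :: "'b \<Rightarrow> 'b"
  assumes "strict_2term_nij_Linf s0 d0 s1 d1 t b00 b01 b10 N0 N1"
  shows "nijenhuis_lie_conformal (sum_scale s0 s1) (sum_map d0 d1)
           (sum_bracket s1 d1 t b00 b01) (sum_map N0 N1)"
proof -
  interpret S: S2 s0 d0 s1 d1 t b00 b01 b10 N0 N1 by unfold_locales (rule assms)
  show ?thesis by (rule S.main)
qed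


end
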